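(* Let $T>0$, $\lambda>0$, $\varrho\ge0$, $\phi\ge0$ and $G\in\mathcal G$. Then for every $t\in[0,T]$ the operator $\mathbf D_t=2\lambda\,{\rm id}+\tilde{\mathbf G}_t+\tilde{\mathbf G}_t^*+2\phi\,\mathbf 1_t^*\mathbf 1_t$ on $L^2([0,T],\mathbb R)$ is positive definite, self-adjoint and invertible.
   Context: A kernel $G:[0,T]^2\to[0,\infty)$ is Volterra if $G(t,s)=0$ for $s\ge t$, nonnegative definite if $\int_0^T\int_0^T(G(t,s)+G(s,t))f(s)f(t)dsdt\ge0$ for all $f\in L^2([0,T],\mathbb R)$; $\mathcal G$ is the class of nonnegative definite Volterra kernels with $\sup_t\int_0^T|G(t,s)|^2ds+\sup_s\int_0^T|G(t,s)|^2dt<\infty$ and $\lim_{h\to0}\int_0^T|G(t+h,s)-G(t,s)|^2ds=0$ for each $t$. $\tilde G(t,s)=2\varrho\mathbb 1_{\{s<t\}}+G(t,s)$; $\tilde{\mathbf G}_t$ is the integral operator with kernel $\tilde G(s,u)\mathbb 1_{\{u\ge t\}}$, i.e. $(\tilde{\mathbf G}_tf)(s)=\int_0^T\tilde G(s,u)\mathbb 1_{\{u\ge t\}}f(u)du$; $\mathbf 1_t$ is the integral operator $(\mathbf 1_tf)(u)=\int_0^T\mathbb 1_{\{u\ge s\}}\mathbb 1_{\{s\ge t\}}f(s)ds$; ${}^*$ denotes the $L^2$-adjoint; ${\rm id}$ is the identity. Positive definite means $\langle\mathbf D_tf,f\rangle>0$ for all nonzero $f$. *)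

theory Defs
  imports "HOL-Analysis.Analysis"
begin

abbreviation LT :: "real \<Rightarrow> real measure" where
  "LT T \<equiv> lebesgue_on {0..T}"

text \<open>L^2([0,T],R): measurable, square-integrable real functions (elements are
  representatives; equality in L^2 is almost-everywhere equality).\<close>
definition L2 :: "real \<Rightarrow> (real \<Rightarrow> real) set" where
  "L2 T = {f. f \<in> borel_measurable (LT T) \<and> integrable (LT T) (\<lambda>x. (f x)\<^sup>2)}"

definition inner_L2 :: "real \<Rightarrow> (real \<Rightarrow> real) \<Rightarrow> (real \<Rightarrow> real) \<Rightarrow> real" where
  "inner_L2 T f g = (\<integral>x. f x * g x \<partial>LT T)"

definition norm_L2 :: "real \<Rightarrow> (real \<Rightarrow> real) \<Rightarrow> real" where
  "norm_L2 T f = sqrt (\<integral>x. (f x)\<^sup>2 \<partial>LT T)"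

definition volterra :: "real \<Rightarrow> (real \<Rightarrow> real \<Rightarrow> real) \<Rightarrow> bool" where
  "volterra T G \<longleftrightarrow> (\<forall>t\<in>{0..T}. \<forall>s\<in>{0..T}. s \<ge> t \<longrightarrow> G t s = 0)"

definition nonneg_definite :: "real \<Rightarrow> (real \<Rightarrow> real \<Rightarrow> real) \<Rightarrow> bool" where
  "nonneg_definite T G \<longleftrightarrow>
     (\<forall>f\<in>L2 T. (\<integral>t. (\<integral>s. (G t s + G s t) * f s * f t \<partial>LT T) \<partial>LT T) \<ge> 0)"

definition kernel_class :: "real \<Rightarrow> (real \<Rightarrow> real \<Rightarrow> real) \<Rightarrow> bool" where
  "kernel_class T G \<longleftrightarrow>
     (\<lambda>(t, s). G t s) \<in> borel_measurable (lebesgue_on ({0..T} \<times> {0..T})) \<and>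
     (\<forall>t\<in>{0..T}. \<forall>s\<in>{0..T}. G t s \<ge> 0) \<and>
     volterra T G \<and> nonneg_definite T G \<and>
     (\<exists>C::real. (\<forall>t\<in>{0..T}. (\<integral>\<^sup>+ s. ennreal ((G t s)\<^sup>2) \<partial>LT T) \<le> ennreal C) \<and>
                (\<forall>s\<in>{0..T}. (\<integral>\<^sup>+ t. ennreal ((G t s)\<^sup>2) \<partial>LT T) \<le> ennreal C)) \<and>
     (\<forall>t\<in>{0..T}. ((\<lambda>u. \<integral>\<^sup>+ s. ennreal ((G u s - G t s)\<^sup>2) \<partial>LT T) \<longlongrightarrow> 0)
                     (at t within {0..T}))"

definition kop :: "real \<Rightarrow> (real \<Rightarrow> real \<Rightarrow> real) \<Rightarrow> (real \<Rightarrow> real) \<Rightarrow> (real \<Rightarrow> real)" where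
  "kop T K f = (\<lambda>x. \<integral>y. K x y * f y \<partial>LT T)"

definition kadj :: "(real \<Rightarrow> real \<Rightarrow> real) \<Rightarrow> (real \<Rightarrow> real \<Rightarrow> real)" where
  "kadj K = (\<lambda>x y. K y x)"

definition Gtilde :: "real \<Rightarrow> (real \<Rightarrow> real \<Rightarrow> real) \<Rightarrow> real \<Rightarrow> real \<Rightarrow> real" where
  "Gtilde \<rho> G t s = 2 * \<rho> * (if s < t then 1 else 0) + G t s"

definition Gt_kernel :: "real \<Rightarrow> (real \<Rightarrow> real \<Rightarrow> real) \<Rightarrow> real \<Rightarrow> real \<Rightarrow> real \<Rightarrow> real" where
  "Gt_kernel \<rho> G t = (\<lambda>s u. Gtilde \<rho> G s u * (if u \<ge> t then 1 else 0))"

definition one_kernel :: "real \<Rightarrow> real \<Rightarrow> real \<Rightarrow> real" where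
  "one_kernel t = (\<lambda>u s. (if u \<ge> s then 1 else 0) * (if s \<ge> t then 1 else 0))"

definition D_op :: "real \<Rightarrow> real \<Rightarrow> real \<Rightarrow> real \<Rightarrow> (real \<Rightarrow> real \<Rightarrow> real) \<Rightarrow> real
                     \<Rightarrow> (real \<Rightarrow> real) \<Rightarrow> (real \<Rightarrow> real)" where
  "D_op T lam \<rho> \<phi> G t f = (\<lambda>x. 2 * lam * f x
      + kop T (Gt_kernel \<rho> G t) f x
      + kop T (kadj (Gt_kernel \<rho> G t)) f x
      + 2 * \<phi> * kop T (kadj (one_kernel t)) (kop T (one_kernel t) f) x)"

end

theory Submission
  imports Defs
begin
lemma emeasure_LT: "T \<ge> 0 \<Longrightarrow> emeasure (LT T) {0..T} = ennreal T"
  by (simp add: emeasure_restrict_space emeasure_completion)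

lemma measure_LT: "T \<ge> 0 \<Longrightarrow> measure (LT T) {0..T} = T"
  by (simp add: measure_def emeasure_LT)

locale L2T = fixes T :: real assumes T_pos: "T > 0"
begin

sublocale M: finite_measure "LT T"
  by (rule finite_measure_lebesgue_on) auto

sublocale P: pair_sigma_finite "LT T" "LT T"
  by unfold_locales

lemma L2_meas[measurable_dest]: "f \<in> L2 T \<Longrightarrow> f \<in> borel_measurable (LT T)"
  by (simp add: L2_def)

lemma L2_sq: "f \<in> L2 T \<Longrightarrow> integrable (LT T) (\<lambda>x. (f x)\<^sup>2)"
  by (simp add: L2_def)

lemma L2I: "f \<in> borel_measurable (LT T) \<Longrightarrow> integrable (LT T) (\<lambda>x. (f x)\<^sup>2) \<Longrightarrow> f \<in> L2 T"
  by (simp add: L2_def)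

lemma L2_int_mult: assumes "f \<in> L2 T" "g \<in> L2 T" shows "integrable (LT T) (\<lambda>x. f x * g x)"
proof -
  have i: "integrable (LT T) (\<lambda>x. (f x)\<^sup>2 + (g x)\<^sup>2)" using assms by (auto intro: L2_sq)
  have m: "(\<lambda>x. f x * g x) \<in> borel_measurable (LT T)" using assms by (auto dest: L2_meas)
  have a: "AE x in LT T. norm (f x * g x) \<le> norm ((f x)\<^sup>2 + (g x)\<^sup>2)"
  proof (rule AE_I2)
    fix x
    have "0 \<le> (\<bar>f x\<bar> - \<bar>g x\<bar>)\<^sup>2" by simp
    then have "2 * (\<bar>f x\<bar> * \<bar>g x\<bar>) \<le> (f x)\<^sup>2 + (g x)\<^sup>2"
      by (simp add: power2_diff)
    moreover have "0 \<le> \<bar>f x\<bar> * \<bar>g x\<bar>" by simp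
    ultimately have "\<bar>f x * g x\<bar> \<le> (f x)\<^sup>2 + (g x)\<^sup>2"
      unfolding abs_mult by linarith
    then show "norm (f x * g x) \<le> norm ((f x)\<^sup>2 + (g x)\<^sup>2)" by simp
  qed
  show ?thesis by (rule Bochner_Integration.integrable_bound[OF i m a])
qed

lemma L2_int: "f \<in> L2 T \<Longrightarrow> integrable (LT T) f"
  by (rule M.square_integrable_imp_integrable) (auto intro: L2_sq L2_meas)

lemma L2_add: assumes "f \<in> L2 T" "g \<in> L2 T" shows "(\<lambda>x. f x + g x) \<in> L2 T"
proof (rule L2I)
  show "(\<lambda>x. f x + g x) \<in> borel_measurable (LT T)" using assms by (auto dest: L2_meas)
  have "integrable (LT T) (\<lambda>x. (f x)\<^sup>2 + 2 * (f x * g x) + (g x)\<^sup>2)"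
    using assms by (intro Bochner_Integration.integrable_add Bochner_Integration.integrable_mult_right L2_sq L2_int_mult)
  moreover have "(\<lambda>x. (f x + g x)\<^sup>2) = (\<lambda>x. (f x)\<^sup>2 + 2 * (f x * g x) + (g x)\<^sup>2)"
    by (simp add: power2_sum fun_eq_iff)
  ultimately show "integrable (LT T) (\<lambda>x. (f x + g x)\<^sup>2)" by simp
qed

lemma L2_scale: assumes "f \<in> L2 T" shows "(\<lambda>x. c * f x) \<in> L2 T"
proof (rule L2I)
  show "(\<lambda>x. c * f x) \<in> borel_measurable (LT T)" using assms by (auto dest: L2_meas)
  have "integrable (LT T) (\<lambda>x. c\<^sup>2 * (f x)\<^sup>2)"
    using assms by (auto intro!: L2_sq)
  then show "integrable (LT T) (\<lambda>x. (c * f x)\<^sup>2)" by (simp add: power_mult_distrib)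
qed

lemma L2_lin: "f \<in> L2 T \<Longrightarrow> g \<in> L2 T \<Longrightarrow> (\<lambda>x. a * f x + b * g x) \<in> L2 T"
  by (intro L2_add L2_scale)

lemma L2_diff: "f \<in> L2 T \<Longrightarrow> g \<in> L2 T \<Longrightarrow> (\<lambda>x. f x - g x) \<in> L2 T"
  using L2_lin[of f g 1 "-1"] by simp

lemma L2_zero: "(\<lambda>x. 0) \<in> L2 T"
  by (rule L2I) auto

lemma L2_sum: "(\<And>i. i \<in> I \<Longrightarrow> u i \<in> L2 T) \<Longrightarrow> (\<lambda>x. \<Sum>i\<in>I. u i x) \<in> L2 T"
proof (induction I rule: infinite_finite_induct)
  case (infinite A) then show ?case by (simp add: L2_zero)
next
  case empty then show ?case by (simp add: L2_zero)
next
  case (insert i F) then show ?case by (simp add: L2_add)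
qed

lemma L2_cong: "f \<in> L2 T \<Longrightarrow> (\<And>x. x \<in> {0..T} \<Longrightarrow> f x = g x) \<Longrightarrow> g \<in> L2 T"
  unfolding L2_def
  by (metis (no_types, lifting) Bochner_Integration.integrable_cong measurable_cong mem_Collect_eq space_lebesgue_on)

lemma meas_AE_cong:
  assumes f: "f \<in> borel_measurable (LT T)" and ae: "AE x in LT T. f x = g x"
  shows "(g::real\<Rightarrow>real) \<in> borel_measurable (LT T)"
proof -
  have S: "{0..T} \<in> sets lebesgue" by simp
  have "(\<lambda>x. if x \<in> {0..T} then f x else 0) \<in> borel_measurable lebesgue"
    using borel_measurable_if[OF S] f by blast
  moreover have "AE x in lebesgue. (if x \<in> {0..T} then f x else 0) = (if x \<in> {0..T} then g x else 0)"
    using ae by (simp add: AE_restrict_space_iff)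
  ultimately have "(\<lambda>x. if x \<in> {0..T} then g x else 0) \<in> borel_measurable lebesgue"
    by (rule borel_measurable_AE)
  then show ?thesis using borel_measurable_if[OF S] by blast
qed

lemma integral_AE_cong:
  assumes f: "(f::real\<Rightarrow>real) \<in> borel_measurable (LT T)" and ae: "AE x in LT T. f x = g x"
  shows "integral\<^sup>L (LT T) g = integral\<^sup>L (LT T) f"
proof -
  have "AE x in LT T. g x = f x" using ae by (auto elim: eventually_mono)
  then show ?thesis by (rule integral_cong_AE[OF meas_AE_cong[OF f ae] f])
qed

lemma L2_AE_cong: assumes "f \<in> L2 T" "AE x in LT T. f x = g x" shows "g \<in> L2 T"
proof (rule L2I)
  show g: "g \<in> borel_measurable (LT T)" using assms meas_AE_cong L2_meas by blast
  have "integrable (LT T) (\<lambda>x. (f x)\<^sup>2)" using assms L2_sq by blast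
  then show "integrable (LT T) (\<lambda>x. (g x)\<^sup>2)"
    using assms(2) g by (subst integrable_cong_AE[where g="\<lambda>x. (f x)\<^sup>2"]) (auto elim: eventually_mono)
qed

lemma AE_lborel_LT: "AE x in lborel. P x \<Longrightarrow> AE x in LT T. P x"
  by (simp add: AE_restrict_space_iff AE_completion eventually_mono)

lemma AE_LT_space: "AE x in LT T. x \<in> {0..T}"
  by (metis AE_space space_lebesgue_on)

end

context L2T begin

lemma norm_L2_nonneg: "norm_L2 T f \<ge> 0"
  by (simp add: norm_L2_def)

lemma norm_L2_sq: "(norm_L2 T f)\<^sup>2 = (\<integral>x. (f x)\<^sup>2 \<partial>LT T)"
  unfolding norm_L2_def by (simp add: integral_nonneg_AE)

lemma inner_L2_self: "inner_L2 T f f = (norm_L2 T f)\<^sup>2"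
  unfolding inner_L2_def norm_L2_sq by (simp add: power2_eq_square)

lemma inner_L2_comm: "inner_L2 T f g = inner_L2 T g f"
  by (simp add: inner_L2_def mult.commute)

lemma inner_L2_cong: "(\<And>x. x \<in> {0..T} \<Longrightarrow> f x = f' x) \<Longrightarrow> (\<And>x. x \<in> {0..T} \<Longrightarrow> g x = g' x) \<Longrightarrow>
   inner_L2 T f g = inner_L2 T f' g'"
  unfolding inner_L2_def by (intro Bochner_Integration.integral_cong) auto

lemma norm_L2_cong: "(\<And>x. x \<in> {0..T} \<Longrightarrow> f x = f' x) \<Longrightarrow> norm_L2 T f = norm_L2 T f'"
  unfolding norm_L2_def by (intro arg_cong[where f=sqrt] Bochner_Integration.integral_cong) auto

lemma norm_L2_AE_cong: assumes "f \<in> L2 T" "AE x in LT T. f x = g x" shows "norm_L2 T g = norm_L2 T f"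
proof -
  have "AE x in LT T. (f x)\<^sup>2 = (g x)\<^sup>2" using assms(2) by (auto elim: eventually_mono)
  then have "(\<integral>x. (g x)\<^sup>2 \<partial>LT T) = (\<integral>x. (f x)\<^sup>2 \<partial>LT T)"
    using assms(1) by (intro integral_AE_cong) (auto dest: L2_meas)
  then show ?thesis by (simp add: norm_L2_def)
qed

lemma inner_L2_AE_cong: assumes "f \<in> L2 T" "g \<in> L2 T" "AE x in LT T. f x = f' x"
  shows "inner_L2 T f' g = inner_L2 T f g"
proof -
  have "AE x in LT T. f x * g x = f' x * g x" using assms(3) by (auto elim: eventually_mono)
  then show ?thesis unfolding inner_L2_def
    using assms(1,2) by (intro integral_AE_cong) (auto dest: L2_meas)
qed

lemma norm_L2_zero_AE: assumes "f \<in> L2 T" "norm_L2 T f = 0" shows "AE x in LT T. f x = 0"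
proof -
  have "(\<integral>x. (f x)\<^sup>2 \<partial>LT T) = 0" using assms(2) norm_L2_sq[of f] by simp
  then have "AE x in LT T. (f x)\<^sup>2 = 0"
    using integral_nonneg_eq_0_iff_AE[OF L2_sq[OF assms(1)]] by simp
  then show ?thesis by (auto elim: eventually_mono)
qed

lemma norm_L2_pos: "f \<in> L2 T \<Longrightarrow> \<not> (AE x in LT T. f x = 0) \<Longrightarrow> norm_L2 T f > 0"
  using norm_L2_zero_AE norm_L2_nonneg[of f] by force

lemma inner_L2_add_left: "f \<in> L2 T \<Longrightarrow> g \<in> L2 T \<Longrightarrow> h \<in> L2 T \<Longrightarrow>
   inner_L2 T (\<lambda>x. f x + g x) h = inner_L2 T f h + inner_L2 T g h"
  unfolding inner_L2_def by (simp add: distrib_right L2_int_mult)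

lemma inner_L2_diff_left: "f \<in> L2 T \<Longrightarrow> g \<in> L2 T \<Longrightarrow> h \<in> L2 T \<Longrightarrow>
   inner_L2 T (\<lambda>x. f x - g x) h = inner_L2 T f h - inner_L2 T g h"
  unfolding inner_L2_def by (simp add: left_diff_distrib L2_int_mult)

lemma inner_L2_scale_left: "inner_L2 T (\<lambda>x. c * f x) h = c * inner_L2 T f h"
  unfolding inner_L2_def by (simp add: mult.assoc)

lemma inner_L2_scale_right: "inner_L2 T f (\<lambda>x. c * h x) = c * inner_L2 T f h"
  unfolding inner_L2_def by (simp add: mult.left_commute)

lemma CS: assumes f: "f \<in> L2 T" and g: "g \<in> L2 T"
  shows "inner_L2 T f g \<le> norm_L2 T f * norm_L2 T g"
proof (cases "norm_L2 T f = 0 \<or> norm_L2 T g = 0")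
  case True
  then have "AE x in LT T. f x * g x = 0"
    using norm_L2_zero_AE[OF f] norm_L2_zero_AE[OF g] by (auto elim: eventually_mono)
  then have "inner_L2 T f g = 0" unfolding inner_L2_def
    by (subst integral_AE_cong[where f="\<lambda>x. 0"]) auto
  then show ?thesis using True norm_L2_nonneg[of f] norm_L2_nonneg[of g] by auto
next
  case False
  define a where "a = norm_L2 T f"
  define b where "b = norm_L2 T g"
  have ab: "a > 0" "b > 0" using False norm_L2_nonneg[of f] norm_L2_nonneg[of g] a_def b_def by auto
  have h: "(\<lambda>x. b * f x - a * g x) \<in> L2 T" using f g by (intro L2_diff L2_scale)
  have "0 \<le> (\<integral>x. (b * f x - a * g x)\<^sup>2 \<partial>LT T)" by simp
  also have "\<dots> = (\<integral>x. b\<^sup>2 * (f x)\<^sup>2 - 2 * a * b * (f x * g x) + a\<^sup>2 * (g x)\<^sup>2 \<partial>LT T)"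
    by (intro Bochner_Integration.integral_cong) (auto simp: power2_diff power_mult_distrib)
  also have "\<dots> = b\<^sup>2 * (\<integral>x. (f x)\<^sup>2 \<partial>LT T) - 2 * a * b * inner_L2 T f g + a\<^sup>2 * (\<integral>x. (g x)\<^sup>2 \<partial>LT T)"
    using f g by (simp add: inner_L2_def L2_sq L2_int_mult)
  also have "\<dots> = 2 * a * b * (a * b - inner_L2 T f g)"
    using norm_L2_sq[of f, folded a_def] norm_L2_sq[of g, folded b_def] by (simp add: power2_eq_square algebra_simps)
  finally have "0 \<le> a * b - inner_L2 T f g"
    using ab by (simp add: zero_le_mult_iff) (smt (verit) mult_pos_pos)
  then show ?thesis by (simp add: a_def b_def)
qed

lemma CS_abs: assumes f: "f \<in> L2 T" and g: "g \<in> L2 T"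
  shows "\<bar>inner_L2 T f g\<bar> \<le> norm_L2 T f * norm_L2 T g"
proof -
  have "- inner_L2 T f g = inner_L2 T (\<lambda>x. (-1) * f x) g" using inner_L2_scale_left[of "-1" f g] by simp
  also have "\<dots> \<le> norm_L2 T (\<lambda>x. (-1) * f x) * norm_L2 T g" using f g by (intro CS L2_scale)
  also have "norm_L2 T (\<lambda>x. (-1) * f x) = norm_L2 T f" by (simp add: norm_L2_def)
  finally show ?thesis using CS[OF f g] by linarith
qed

lemma L2_abs: "f \<in> L2 T \<Longrightarrow> (\<lambda>x. \<bar>f x\<bar>) \<in> L2 T"
  unfolding L2_def by auto

lemma norm_L2_abs: "norm_L2 T (\<lambda>x. \<bar>f x\<bar>) = norm_L2 T f"
  by (simp add: norm_L2_def)

lemma CS_int_abs: assumes f: "f \<in> L2 T" and g: "g \<in> L2 T"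
  shows "(\<integral>x. \<bar>f x * g x\<bar> \<partial>LT T) \<le> norm_L2 T f * norm_L2 T g"
  using CS[OF L2_abs[OF f] L2_abs[OF g]] by (simp add: inner_L2_def norm_L2_abs abs_mult)

lemma norm_L2_scale: "norm_L2 T (\<lambda>x. c * f x) = \<bar>c\<bar> * norm_L2 T f"
proof -
  have "norm_L2 T (\<lambda>x. c * f x) = sqrt (c\<^sup>2 * (\<integral>x. (f x)\<^sup>2 \<partial>LT T))"
    by (simp add: norm_L2_def power_mult_distrib)
  then show ?thesis by (simp add: real_sqrt_mult norm_L2_def)
qed

lemma norm_L2_triangle: assumes f: "f \<in> L2 T" and g: "g \<in> L2 T"
  shows "norm_L2 T (\<lambda>x. f x + g x) \<le> norm_L2 T f + norm_L2 T g"
proof -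
  have "(norm_L2 T (\<lambda>x. f x + g x))\<^sup>2 = (\<integral>x. (f x)\<^sup>2 + 2 * (f x * g x) + (g x)\<^sup>2 \<partial>LT T)"
    unfolding norm_L2_sq by (intro Bochner_Integration.integral_cong refl) (simp add: power2_sum)
  also have "\<dots> = (norm_L2 T f)\<^sup>2 + 2 * inner_L2 T f g + (norm_L2 T g)\<^sup>2"
    using f g by (simp add: norm_L2_sq inner_L2_def L2_sq L2_int_mult)
  also have "\<dots> \<le> (norm_L2 T f + norm_L2 T g)\<^sup>2"
    using CS[OF f g] by (simp add: power2_sum)
  finally show ?thesis
    using norm_L2_nonneg[of f] norm_L2_nonneg[of g] norm_L2_nonneg[of "\<lambda>x. f x + g x"]
    by (meson add_nonneg_nonneg power2_le_imp_le)
qed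

lemma norm_L2_diff_triangle: assumes f: "f \<in> L2 T" and g: "g \<in> L2 T"
  shows "norm_L2 T (\<lambda>x. f x - g x) \<le> norm_L2 T f + norm_L2 T g"
  using norm_L2_triangle[OF f L2_scale[OF g, of "-1"]] norm_L2_scale[of "-1" g] by simp

end

definition bker :: "real \<Rightarrow> (real \<Rightarrow> real \<Rightarrow> real) \<Rightarrow> real \<Rightarrow> bool" where
  "bker T K C \<longleftrightarrow> C \<ge> 0 \<and> (\<lambda>p. K (fst p) (snd p)) \<in> borel_measurable (LT T \<Otimes>\<^sub>M LT T) \<and>
     (\<forall>x\<in>{0..T}. (\<integral>\<^sup>+y. ennreal ((K x y)\<^sup>2) \<partial>LT T) \<le> ennreal C) \<and>
     (\<forall>y\<in>{0..T}. (\<integral>\<^sup>+x. ennreal ((K x y)\<^sup>2) \<partial>LT T) \<le> ennreal C)"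

lemma kop_cong: "(\<And>y. y \<in> {0..T} \<Longrightarrow> f y = g y) \<Longrightarrow> kop T K f x = kop T K g x"
  unfolding kop_def by (intro Bochner_Integration.integral_cong) auto

lemma kadj_kadj[simp]: "kadj (kadj K) = K"
  by (simp add: kadj_def)

context L2T begin

lemma bker_meas: "bker T K C \<Longrightarrow> (\<lambda>p. K (fst p) (snd p)) \<in> borel_measurable (LT T \<Otimes>\<^sub>M LT T)"
  by (simp add: bker_def)

lemma bker_C: "bker T K C \<Longrightarrow> C \<ge> 0"
  by (simp add: bker_def)

lemma bker_kadj: assumes "bker T K C" shows "bker T (kadj K) C"
proof -
  have m: "(\<lambda>p. K (fst p) (snd p)) \<in> borel_measurable (LT T \<Otimes>\<^sub>M LT T)" using assms by (simp add: bker_def)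
  have "(\<lambda>p. K (fst p) (snd p)) \<circ> (\<lambda>(x,y). (y,x)) \<in> borel_measurable (LT T \<Otimes>\<^sub>M LT T)"
    by (rule measurable_comp[OF measurable_pair_swap' m])
  then have "(\<lambda>p. kadj K (fst p) (snd p)) \<in> borel_measurable (LT T \<Otimes>\<^sub>M LT T)"
    by (simp add: kadj_def comp_def case_prod_beta)
  then show ?thesis using assms by (simp add: bker_def kadj_def)
qed

lemma bker_row: assumes k: "bker T K C" and x: "x \<in> {0..T}"
  shows "(\<lambda>y. K x y) \<in> L2 T" "(\<integral>y. (K x y)\<^sup>2 \<partial>LT T) \<le> C" "norm_L2 T (\<lambda>y. K x y) \<le> sqrt C"
proof -
  have m: "(\<lambda>p. K (fst p) (snd p)) \<in> borel_measurable (LT T \<Otimes>\<^sub>M LT T)" using k by (simp add: bker_def)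
  have my: "(\<lambda>y. K x y) \<in> borel_measurable (LT T)"
    using measurable_Pair2[OF m, of x] x by simp
  have b: "(\<integral>\<^sup>+y. ennreal ((K x y)\<^sup>2) \<partial>LT T) \<le> ennreal C" using k x by (simp add: bker_def)
  have C: "C \<ge> 0" using k by (simp add: bker_def)
  have fin: "(\<integral>\<^sup>+y. ennreal ((K x y)\<^sup>2) \<partial>LT T) < \<infinity>"
    using b by (simp add: le_less_trans)
  show L: "(\<lambda>y. K x y) \<in> L2 T"
    using my fin by (auto intro!: L2I simp: integrable_iff_bounded)
  have "(\<integral>y. (K x y)\<^sup>2 \<partial>LT T) = enn2real (\<integral>\<^sup>+y. ennreal ((K x y)\<^sup>2) \<partial>LT T)"
    using my by (intro integral_eq_nn_integral) auto
  also have "\<dots> \<le> enn2real (ennreal C)"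
    using b by (intro enn2real_mono) auto
  finally show I: "(\<integral>y. (K x y)\<^sup>2 \<partial>LT T) \<le> C" using C by simp
  show "norm_L2 T (\<lambda>y. K x y) \<le> sqrt C"
    using I by (simp add: norm_L2_def)
qed

lemma bker_col: assumes k: "bker T K C" and y: "y \<in> {0..T}"
  shows "(\<lambda>x. K x y) \<in> L2 T" "norm_L2 T (\<lambda>x. K x y) \<le> sqrt C"
  using bker_row[OF bker_kadj[OF k] y] by (simp_all add: kadj_def)

lemma kop_int: assumes "bker T K C" "f \<in> L2 T" "x \<in> {0..T}" shows "integrable (LT T) (\<lambda>y. K x y * f y)"
  using L2_int_mult[OF bker_row(1)[OF assms(1,3)] assms(2)] .

lemma kop_bound: assumes k: "bker T K C" and f: "f \<in> L2 T" and x: "x \<in> {0..T}"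
  shows "\<bar>kop T K f x\<bar> \<le> sqrt C * norm_L2 T f"
proof -
  have "\<bar>kop T K f x\<bar> = \<bar>inner_L2 T (\<lambda>y. K x y) f\<bar>" by (simp add: kop_def inner_L2_def)
  also have "\<dots> \<le> norm_L2 T (\<lambda>y. K x y) * norm_L2 T f" by (intro CS_abs bker_row[OF k x] f)
  also have "\<dots> \<le> sqrt C * norm_L2 T f" by (intro mult_right_mono bker_row[OF k x] norm_L2_nonneg)
  finally show ?thesis .
qed

lemma kop_meas: assumes k: "bker T K C" and f: "f \<in> L2 T"
  shows "kop T K f \<in> borel_measurable (LT T)"
proof -
  have m[measurable]: "(\<lambda>p. K (fst p) (snd p)) \<in> borel_measurable (LT T \<Otimes>\<^sub>M LT T)" using k by (simp add: bker_def)
  have [measurable]: "f \<in> borel_measurable (LT T)" using f by (rule L2_meas)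
  have "(\<lambda>p. K (fst p) (snd p) * f (snd p)) \<in> borel_measurable (LT T \<Otimes>\<^sub>M LT T)" by measurable
  then have "case_prod (\<lambda>x y. K x y * f y) \<in> borel_measurable (LT T \<Otimes>\<^sub>M LT T)"
    by (simp add: case_prod_beta)
  then show ?thesis unfolding kop_def by (rule M.borel_measurable_lebesgue_integral)
qed

lemma kop_L2: assumes k: "bker T K C" and f: "f \<in> L2 T"
  shows "kop T K f \<in> L2 T" "norm_L2 T (kop T K f) \<le> sqrt (C * T) * norm_L2 T f"
proof -
  have m: "kop T K f \<in> borel_measurable (LT T)" by (rule kop_meas[OF k f])
  have b: "\<And>x. x \<in> {0..T} \<Longrightarrow> (kop T K f x)\<^sup>2 \<le> (sqrt C * norm_L2 T f)\<^sup>2"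
    using kop_bound[OF k f] by (metis abs_ge_zero power2_abs power_mono)
  have i: "integrable (LT T) (\<lambda>x. (kop T K f x)\<^sup>2)"
    using b m by (intro M.integrable_const_bound[where B="(sqrt C * norm_L2 T f)\<^sup>2"]) (auto intro!: AE_I2)
  show "kop T K f \<in> L2 T" using m i by (rule L2I)
  have C: "C \<ge> 0" using k by (simp add: bker_def)
  have "(\<integral>x. (kop T K f x)\<^sup>2 \<partial>LT T) \<le> (\<integral>x. (sqrt C * norm_L2 T f)\<^sup>2 \<partial>LT T)"
    using b i by (intro integral_mono) auto
  also have "\<dots> = T * (sqrt C * norm_L2 T f)\<^sup>2"
    using measure_LT[of T] T_pos by simp
  finally have "(\<integral>x. (kop T K f x)\<^sup>2 \<partial>LT T) \<le> T * (sqrt C * norm_L2 T f)\<^sup>2" .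
  then have "norm_L2 T (kop T K f) \<le> sqrt (T * (sqrt C * norm_L2 T f)\<^sup>2)"
    unfolding norm_L2_def by simp
  also have "\<dots> = sqrt (C * T) * norm_L2 T f"
    using C T_pos norm_L2_nonneg[of f] by (simp add: real_sqrt_mult)
  finally show "norm_L2 T (kop T K f) \<le> sqrt (C * T) * norm_L2 T f" .
qed

lemma kop_lin: assumes k: "bker T K C" and f: "f \<in> L2 T" and g: "g \<in> L2 T" and x: "x \<in> {0..T}"
  shows "kop T K (\<lambda>y. a * f y + b * g y) x = a * kop T K f x + b * kop T K g x"
proof -
  have "kop T K (\<lambda>y. a * f y + b * g y) x = (\<integral>y. a * (K x y * f y) + b * (K x y * g y) \<partial>LT T)"
    unfolding kop_def by (intro Bochner_Integration.integral_cong) (auto simp: algebra_simps)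
  also have "\<dots> = a * kop T K f x + b * kop T K g x"
    unfolding kop_def using kop_int[OF k f x] kop_int[OF k g x] by simp
  finally show ?thesis .
qed

lemma kop_adj: assumes k: "bker T K C" and f: "f \<in> L2 T" and g: "g \<in> L2 T"
  shows "inner_L2 T (kop T K f) g = inner_L2 T f (kop T (kadj K) g)"
proof -
  have m[measurable]: "(\<lambda>p. K (fst p) (snd p)) \<in> borel_measurable (LT T \<Otimes>\<^sub>M LT T)" using k by (simp add: bker_def)
  have [measurable]: "f \<in> borel_measurable (LT T)" "g \<in> borel_measurable (LT T)" using f g by (auto intro: L2_meas)
  define H where "H = (\<lambda>x y. K x y * f y * g x)"
  have mH: "(\<lambda>p. K (fst p) (snd p) * f (snd p) * g (fst p)) \<in> borel_measurable (LT T \<Otimes>\<^sub>M LT T)" by measurable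
  then have mH': "case_prod H \<in> borel_measurable (LT T \<Otimes>\<^sub>M LT T)" by (simp add: H_def case_prod_beta)
  have mHn: "(\<lambda>p. ennreal (norm (case_prod H p))) \<in> borel_measurable (LT T \<Otimes>\<^sub>M LT T)" using mH' by measurable
  have C: "C \<ge> 0" using k by (simp add: bker_def)
  have ig: "integrable (LT T) g" using g by (rule L2_int)
  have "(\<integral>\<^sup>+p. ennreal (norm (case_prod H p)) \<partial>(LT T \<Otimes>\<^sub>M LT T))
        = (\<integral>\<^sup>+x. (\<integral>\<^sup>+y. ennreal (norm (H x y)) \<partial>LT T) \<partial>LT T)"
    using M.nn_integral_fst[OF mHn] by simp
  also have "\<dots> \<le> (\<integral>\<^sup>+x. ennreal (\<bar>g x\<bar>) * ennreal (sqrt C * norm_L2 T f) \<partial>LT T)"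
  proof (intro nn_integral_mono)
    fix x assume "x \<in> space (LT T)"
    then have x: "x \<in> {0..T}" by simp
    have "(\<integral>\<^sup>+y. ennreal (norm (H x y)) \<partial>LT T) = (\<integral>\<^sup>+y. ennreal (\<bar>g x\<bar>) * ennreal (\<bar>K x y * f y\<bar>) \<partial>LT T)"
      by (intro nn_integral_cong) (auto simp: H_def abs_mult ennreal_mult[symmetric] mult_ac)
    also have "\<dots> = ennreal (\<bar>g x\<bar>) * (\<integral>\<^sup>+y. ennreal (\<bar>K x y * f y\<bar>) \<partial>LT T)"
      using kop_int[OF k f x] by (intro nn_integral_cmult) auto
    also have "(\<integral>\<^sup>+y. ennreal (\<bar>K x y * f y\<bar>) \<partial>LT T) = ennreal (\<integral>y. \<bar>K x y * f y\<bar> \<partial>LT T)"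
      using kop_int[OF k f x] by (intro nn_integral_eq_integral) auto
    finally have 1: "(\<integral>\<^sup>+y. ennreal (norm (H x y)) \<partial>LT T) = ennreal (\<bar>g x\<bar>) * ennreal (\<integral>y. \<bar>K x y * f y\<bar> \<partial>LT T)" .
    have "(\<integral>y. \<bar>K x y * f y\<bar> \<partial>LT T) \<le> norm_L2 T (\<lambda>y. K x y) * norm_L2 T f"
      by (intro CS_int_abs bker_row[OF k x] f)
    also have "\<dots> \<le> sqrt C * norm_L2 T f" by (intro mult_right_mono bker_row[OF k x] norm_L2_nonneg)
    finally have 2: "(\<integral>y. \<bar>K x y * f y\<bar> \<partial>LT T) \<le> sqrt C * norm_L2 T f" .
    show "(\<integral>\<^sup>+y. ennreal (norm (H x y)) \<partial>LT T) \<le> ennreal (\<bar>g x\<bar>) * ennreal (sqrt C * norm_L2 T f)"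
      unfolding 1 using 2 by (intro mult_left_mono ennreal_leI) auto
  qed
  also have "\<dots> = (\<integral>\<^sup>+x. ennreal (\<bar>g x\<bar>) \<partial>LT T) * ennreal (sqrt C * norm_L2 T f)"
    by (intro nn_integral_multc) auto
  also have "\<dots> < \<infinity>"
    using ig by (auto simp: integrable_iff_bounded ennreal_mult_less_top)
  finally have iH: "integrable (LT T \<Otimes>\<^sub>M LT T) (case_prod H)"
    using mH' by (simp add: integrable_iff_bounded)
  have "inner_L2 T (kop T K f) g = (\<integral>x. (\<integral>y. H x y \<partial>LT T) \<partial>LT T)"
    by (simp add: inner_L2_def kop_def H_def)
  also have "\<dots> = (\<integral>y. (\<integral>x. H x y \<partial>LT T) \<partial>LT T)"
    by (rule P.Fubini_integral[OF iH, symmetric])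
  also have "\<dots> = inner_L2 T f (kop T (kadj K) g)"
    by (simp add: inner_L2_def kop_def H_def kadj_def mult_ac)
  finally show ?thesis .
qed

end

lemma ennreal_suminf_sq: "(\<Sum>n. A n :: ennreal)\<^sup>2 = (\<Sum>n. \<Sum>m. A n * A m)"
proof -
  have "(\<Sum>n. A n)\<^sup>2 = (\<Sum>n. A n) * (\<Sum>m. A m)" by (simp add: power2_eq_square)
  also have "\<dots> = (\<Sum>n. A n * (\<Sum>m. A m))" by simp
  also have "\<dots> = (\<Sum>n. \<Sum>m. A n * A m)" by simp
  finally show ?thesis .
qed

context L2T begin

lemma mink_inf: assumes v: "\<And>n. v n \<in> L2 T"
  shows "(\<integral>\<^sup>+x. (\<Sum>n. ennreal \<bar>v n x\<bar>)\<^sup>2 \<partial>LT T) \<le> (\<Sum>n. ennreal (norm_L2 T (v n)))\<^sup>2"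
proof -
  have [measurable]: "\<And>n. v n \<in> borel_measurable (LT T)" using v by (auto intro: L2_meas)
  have "(\<integral>\<^sup>+x. (\<Sum>n. ennreal \<bar>v n x\<bar>)\<^sup>2 \<partial>LT T) = (\<integral>\<^sup>+x. (\<Sum>n. \<Sum>m. ennreal \<bar>v n x\<bar> * ennreal \<bar>v m x\<bar>) \<partial>LT T)"
    by (subst ennreal_suminf_sq) (rule refl)
  also have "\<dots> = (\<Sum>n. \<integral>\<^sup>+x. (\<Sum>m. ennreal \<bar>v n x\<bar> * ennreal \<bar>v m x\<bar>) \<partial>LT T)"
    by (intro nn_integral_suminf) measurable
  also have "\<dots> = (\<Sum>n. \<Sum>m. \<integral>\<^sup>+x. ennreal \<bar>v n x\<bar> * ennreal \<bar>v m x\<bar> \<partial>LT T)"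
    by (intro suminf_cong nn_integral_suminf) measurable
  also have "\<dots> \<le> (\<Sum>n. \<Sum>m. ennreal (norm_L2 T (v n)) * ennreal (norm_L2 T (v m)))"
  proof -
    have pt: "(\<integral>\<^sup>+x. ennreal \<bar>v n x\<bar> * ennreal \<bar>v m x\<bar> \<partial>LT T) \<le> ennreal (norm_L2 T (v n)) * ennreal (norm_L2 T (v m))" for n m
    proof -
      have "(\<integral>\<^sup>+x. ennreal \<bar>v n x\<bar> * ennreal \<bar>v m x\<bar> \<partial>LT T) = (\<integral>\<^sup>+x. ennreal \<bar>v n x * v m x\<bar> \<partial>LT T)"
        by (intro nn_integral_cong) (simp add: abs_mult ennreal_mult)
      also have "\<dots> = ennreal (\<integral>x. \<bar>v n x * v m x\<bar> \<partial>LT T)"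
        using L2_int_mult[OF v v] by (intro nn_integral_eq_integral) auto
      also have "\<dots> \<le> ennreal (norm_L2 T (v n) * norm_L2 T (v m))"
        by (intro ennreal_leI CS_int_abs v)
      finally show ?thesis
        by (simp add: ennreal_mult norm_L2_nonneg)
    qed
    show ?thesis by (intro suminf_le summableI pt)
  qed
  also have "\<dots> = (\<Sum>n. ennreal (norm_L2 T (v n)))\<^sup>2"
    by (subst ennreal_suminf_sq) (rule refl)
  finally show ?thesis .
qed

end

context L2T begin
lemma L2_complete: assumes u: "\<And>n. u n \<in> L2 T" and s: "summable (\<lambda>n. norm_L2 T (u n))"
  shows "\<exists>F\<in>L2 T. (\<lambda>N. norm_L2 T (\<lambda>x. F x - (\<Sum>n<N. u n x))) \<longlonglongrightarrow> 0"
proof -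
  have [measurable]: "\<And>n. u n \<in> borel_measurable (LT T)" using u by (auto intro: L2_meas)
  define S where "S x = (\<Sum>n. ennreal \<bar>u n x\<bar>)" for x
  define F where "F x = (\<Sum>n. u n x)" for x
  have mF[measurable]: "F \<in> borel_measurable (LT T)" unfolding F_def by measurable
  have E: "(\<Sum>n. ennreal (norm_L2 T (u n))) = ennreal (\<Sum>n. norm_L2 T (u n))"
    using s by (intro suminf_ennreal2) (auto simp: norm_L2_nonneg)
  have "(\<integral>\<^sup>+x. (S x)\<^sup>2 \<partial>LT T) \<le> (ennreal (\<Sum>n. norm_L2 T (u n)))\<^sup>2"
    unfolding S_def E[symmetric] by (rule mink_inf[OF u])
  also have "\<dots> = ennreal ((\<Sum>n. norm_L2 T (u n))\<^sup>2)"
    by (simp add: ennreal_power suminf_nonneg[OF s] norm_L2_nonneg)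
  also have "\<dots> < \<infinity>" by simp
  finally have "(\<integral>\<^sup>+x. (S x)\<^sup>2 \<partial>LT T) \<noteq> \<infinity>" by simp
  then have "AE x in LT T. (S x)\<^sup>2 \<noteq> \<infinity>"
    by (intro nn_integral_PInf_AE) (auto simp: S_def)
  then have ae: "AE x in LT T. summable (\<lambda>n. \<bar>u n x\<bar>)"
  proof (rule eventually_mono)
    fix x assume "(S x)\<^sup>2 \<noteq> \<infinity>"
    then have "S x \<noteq> top" by (auto simp: power2_eq_square)
    then show "summable (\<lambda>n. \<bar>u n x\<bar>)" unfolding S_def by (intro summable_suminf_not_top) auto
  qed
  define tail where "tail N = (\<Sum>n. norm_L2 T (u (n + N)))" for N
  have tail_nonneg: "tail N \<ge> 0" for N
    unfolding tail_def using summable_ignore_initial_segment[OF s] by (intro suminf_nonneg) (auto simp: norm_L2_nonneg)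
  have key: "(\<lambda>x. F x - (\<Sum>n<N. u n x)) \<in> L2 T \<and> norm_L2 T (\<lambda>x. F x - (\<Sum>n<N. u n x)) \<le> tail N" for N
  proof -
    define w where "w x = F x - (\<Sum>n<N. u n x)" for x
    have mw[measurable]: "w \<in> borel_measurable (LT T)" unfolding w_def by measurable
    have "AE x in LT T. ennreal ((w x)\<^sup>2) \<le> (\<Sum>n. ennreal \<bar>u (n + N) x\<bar>)\<^sup>2"
      using ae
    proof (rule eventually_mono)
      fix x assume sx: "summable (\<lambda>n. \<bar>u n x\<bar>)"
      then have sx': "summable (\<lambda>n. u n x)" by (rule summable_rabs_cancel)
      have sN: "summable (\<lambda>n. \<bar>u (n + N) x\<bar>)" using summable_ignore_initial_segment[OF sx] .
      have "w x = (\<Sum>n. u (n + N) x)" unfolding w_def F_def using suminf_minus_initial_segment[OF sx'] by simp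
      then have "\<bar>w x\<bar> \<le> (\<Sum>n. \<bar>u (n + N) x\<bar>)" using summable_rabs[OF sN] by simp
      then have "(w x)\<^sup>2 \<le> (\<Sum>n. \<bar>u (n + N) x\<bar>)\<^sup>2" by (metis abs_ge_zero power2_abs power_mono)
      then have "ennreal ((w x)\<^sup>2) \<le> ennreal ((\<Sum>n. \<bar>u (n + N) x\<bar>)\<^sup>2)" by (rule ennreal_leI)
      also have "\<dots> = (\<Sum>n. ennreal \<bar>u (n + N) x\<bar>)\<^sup>2"
        by (simp add: suminf_ennreal2[OF _ sN] ennreal_power suminf_nonneg[OF sN])
      finally show "ennreal ((w x)\<^sup>2) \<le> (\<Sum>n. ennreal \<bar>u (n + N) x\<bar>)\<^sup>2" .
    qed
    then have "(\<integral>\<^sup>+x. ennreal ((w x)\<^sup>2) \<partial>LT T) \<le> (\<integral>\<^sup>+x. (\<Sum>n. ennreal \<bar>u (n + N) x\<bar>)\<^sup>2 \<partial>LT T)"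
      by (rule nn_integral_mono_AE)
    also have "\<dots> \<le> (\<Sum>n. ennreal (norm_L2 T (u (n + N))))\<^sup>2"
      by (rule mink_inf) (rule u)
    also have "(\<Sum>n. ennreal (norm_L2 T (u (n + N)))) = ennreal (tail N)"
      unfolding tail_def using summable_ignore_initial_segment[OF s]
      by (intro suminf_ennreal2) (auto simp: norm_L2_nonneg)
    finally have b: "(\<integral>\<^sup>+x. ennreal ((w x)\<^sup>2) \<partial>LT T) \<le> ennreal ((tail N)\<^sup>2)"
      by (simp add: ennreal_power tail_nonneg)
    then have "(\<integral>\<^sup>+x. ennreal ((w x)\<^sup>2) \<partial>LT T) < \<infinity>" by (simp add: le_less_trans)
    then have iw: "integrable (LT T) (\<lambda>x. (w x)\<^sup>2)" by (simp add: integrable_iff_bounded)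
    have "(\<integral>x. (w x)\<^sup>2 \<partial>LT T) = enn2real (\<integral>\<^sup>+x. ennreal ((w x)\<^sup>2) \<partial>LT T)"
      by (intro integral_eq_nn_integral) auto
    also have "\<dots> \<le> enn2real (ennreal ((tail N)\<^sup>2))" using b by (intro enn2real_mono) auto
    finally have "(\<integral>x. (w x)\<^sup>2 \<partial>LT T) \<le> (tail N)\<^sup>2" by simp
    then have "sqrt (\<integral>x. (w x)\<^sup>2 \<partial>LT T) \<le> sqrt ((tail N)\<^sup>2)" by (rule real_sqrt_le_mono)
    then have "norm_L2 T w \<le> tail N"
      unfolding norm_L2_def using tail_nonneg[of N] by simp
    moreover have "w \<in> L2 T" using mw iw by (rule L2I)
    ultimately show ?thesis unfolding w_def[abs_def] by simp
  qed
  have FL2: "F \<in> L2 T" using key[of 0] by simp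
  have "(\<lambda>N. tail N) \<longlonglongrightarrow> 0"
  proof -
    have "tail N = (\<Sum>n. norm_L2 T (u n)) - (\<Sum>n<N. norm_L2 T (u n))" for N
      unfolding tail_def by (rule suminf_minus_initial_segment[OF s])
    moreover have "(\<lambda>N. (\<Sum>n. norm_L2 T (u n)) - (\<Sum>n<N. norm_L2 T (u n))) \<longlonglongrightarrow> (\<Sum>n. norm_L2 T (u n)) - (\<Sum>n. norm_L2 T (u n))"
      by (intro tendsto_diff tendsto_const summable_LIMSEQ[OF s])
    ultimately show ?thesis by simp
  qed
  then have "(\<lambda>N. norm_L2 T (\<lambda>x. F x - (\<Sum>n<N. u n x))) \<longlonglongrightarrow> 0"
    by (rule Lim_null_comparison[rotated]) (use key norm_L2_nonneg in auto)
  then show ?thesis using FL2 by blast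
qed

end

locale coerc = L2T +
  fixes D :: "(real \<Rightarrow> real) \<Rightarrow> real \<Rightarrow> real" and a Mc :: real
  assumes D_L2: "\<And>f. f \<in> L2 T \<Longrightarrow> D f \<in> L2 T"
  and D_bound: "\<And>f. f \<in> L2 T \<Longrightarrow> norm_L2 T (D f) \<le> Mc * norm_L2 T f"
  and D_lin: "\<And>f g \<alpha> \<beta> x. f \<in> L2 T \<Longrightarrow> g \<in> L2 T \<Longrightarrow> x \<in> {0..T} \<Longrightarrow>
      D (\<lambda>y. \<alpha> * f y + \<beta> * g y) x = \<alpha> * D f x + \<beta> * D g x"
  and D_cong: "\<And>f g x. (\<And>y. y \<in> {0..T} \<Longrightarrow> f y = g y) \<Longrightarrow> x \<in> {0..T} \<Longrightarrow> D f x = D g x"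
  and D_coerc: "\<And>f. f \<in> L2 T \<Longrightarrow> inner_L2 T (D f) f \<ge> a * (norm_L2 T f)\<^sup>2"
  and a_pos: "a > 0"
begin

lemma D_zero: "x \<in> {0..T} \<Longrightarrow> D (\<lambda>y. 0) x = 0"
  using D_lin[OF L2_zero L2_zero, of x 0 0] by simp

lemma D_add: "f \<in> L2 T \<Longrightarrow> g \<in> L2 T \<Longrightarrow> x \<in> {0..T} \<Longrightarrow> D (\<lambda>y. f y + g y) x = D f x + D g x"
  using D_lin[of f g x 1 1] by simp

lemma D_scale: "f \<in> L2 T \<Longrightarrow> x \<in> {0..T} \<Longrightarrow> D (\<lambda>y. c * f y) x = c * D f x"
  using D_lin[OF _ L2_zero, of f x c 0] by simp

lemma D_diff: "f \<in> L2 T \<Longrightarrow> g \<in> L2 T \<Longrightarrow> x \<in> {0..T} \<Longrightarrow> D (\<lambda>y. f y - g y) x = D f x - D g x"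
  using D_lin[of f g x 1 "-1"] by simp

lemma D_pos: "f \<in> L2 T \<Longrightarrow> \<not> (AE x in LT T. f x = 0) \<Longrightarrow> inner_L2 T (D f) f > 0"
  using D_coerc[of f] norm_L2_pos[of f] a_pos
  by (smt (verit, best) mult_pos_pos zero_less_power)

lemma D_inj: assumes f: "f \<in> L2 T" and ae: "AE x in LT T. D f x = 0" shows "AE x in LT T. f x = 0"
proof -
  have "inner_L2 T (\<lambda>x. 0) f = inner_L2 T (D f) f"
    by (rule inner_L2_AE_cong[OF D_L2[OF f] f ae])
  then have "inner_L2 T (D f) f = 0" by (simp add: inner_L2_def)
  then have "a * (norm_L2 T f)\<^sup>2 \<le> 0" using D_coerc[OF f] by simp
  then have "norm_L2 T f = 0" using a_pos by (simp add: mult_le_0_iff)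
  then show ?thesis by (rule norm_L2_zero_AE[OF f])
qed

lemma D_lower: assumes f: "f \<in> L2 T" shows "norm_L2 T f \<le> (1 / a) * norm_L2 T (D f)"
proof (cases "norm_L2 T f = 0")
  case True then show ?thesis using a_pos norm_L2_nonneg[of "D f"] by simp
next
  case False
  then have p: "norm_L2 T f > 0" using norm_L2_nonneg[of f] by simp
  have "a * (norm_L2 T f)\<^sup>2 \<le> norm_L2 T (D f) * norm_L2 T f"
    using D_coerc[OF f] CS[OF D_L2[OF f] f] by linarith
  then have "a * norm_L2 T f \<le> norm_L2 T (D f)" using p by (simp add: power2_eq_square)
  then show ?thesis using a_pos by (simp add: field_simps)
qed

definition "M' = max Mc a"
definition "cc = M'\<^sup>2 / a"
definition "qq = sqrt (1 - a\<^sup>2 / M'\<^sup>2)"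

lemma M'_ge: "M' \<ge> a" "M' > 0" using a_pos by (auto simp: M'_def)
lemma cc_pos: "cc > 0" using M'_ge a_pos by (simp add: cc_def)
lemma qq: "0 \<le> qq" "qq < 1"
proof -
  have "a\<^sup>2 / M'\<^sup>2 \<le> 1" using M'_ge a_pos by (simp add: power_mono)
  moreover have "a\<^sup>2 / M'\<^sup>2 > 0" using M'_ge a_pos by simp
  ultimately show "0 \<le> qq" "qq < 1" by (auto simp: qq_def)
qed

lemma D_bound': "f \<in> L2 T \<Longrightarrow> norm_L2 T (D f) \<le> M' * norm_L2 T f"
  using D_bound[of f] norm_L2_nonneg[of f] by (smt (verit) M'_def max.cobounded1 mult_right_mono)

lemma contraction: assumes h: "h \<in> L2 T"
  shows "norm_L2 T (\<lambda>x. h x - (1/cc) * D h x) \<le> qq * norm_L2 T h"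
proof -
  define u where "u = (\<lambda>x. h x - (1/cc) * D h x)"
  have Dh: "D h \<in> L2 T" using D_L2[OF h] .
  have sDh: "(\<lambda>x. (1/cc) * D h x) \<in> L2 T" using L2_scale[OF Dh] .
  have u: "u \<in> L2 T" unfolding u_def using L2_diff[OF h sDh] .
  have hu: "inner_L2 T h u = (norm_L2 T h)\<^sup>2 - (1/cc) * inner_L2 T (D h) h"
    unfolding inner_L2_comm[of h u] unfolding u_def
    using inner_L2_diff_left[OF h sDh h] inner_L2_scale_left[of "1/cc" "D h" h] inner_L2_self[of h] by simp
  have Du: "inner_L2 T (D h) u = inner_L2 T (D h) h - (1/cc) * (norm_L2 T (D h))\<^sup>2"
    unfolding inner_L2_comm[of "D h" u] unfolding u_def
    using inner_L2_diff_left[OF h sDh Dh] inner_L2_scale_left[of "1/cc" "D h" "D h"] inner_L2_self[of "D h"] inner_L2_comm[of h "D h"] by simp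
  have "(norm_L2 T u)\<^sup>2 = inner_L2 T u u" by (simp add: inner_L2_self)
  also have "\<dots> = inner_L2 T h u - (1/cc) * inner_L2 T (D h) u"
    using inner_L2_diff_left[OF h sDh u] inner_L2_scale_left[of "1/cc" "D h" u] unfolding u_def by simp
  also have "\<dots> = (norm_L2 T h)\<^sup>2 - 2 * (1/cc) * inner_L2 T (D h) h + (1/cc)\<^sup>2 * (norm_L2 T (D h))\<^sup>2"
    unfolding hu Du by (simp add: algebra_simps power2_eq_square)
  also have "\<dots> \<le> (norm_L2 T h)\<^sup>2 - 2 * (1/cc) * (a * (norm_L2 T h)\<^sup>2) + (1/cc)\<^sup>2 * (M' * norm_L2 T h)\<^sup>2"
  proof -
    have 1: "2 * (1/cc) * (a * (norm_L2 T h)\<^sup>2) \<le> 2 * (1/cc) * inner_L2 T (D h) h"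
      using D_coerc[OF h] cc_pos by (intro mult_left_mono) auto
    have "(norm_L2 T (D h))\<^sup>2 \<le> (M' * norm_L2 T h)\<^sup>2"
      using D_bound'[OF h] norm_L2_nonneg[of "D h"] by (simp add: power_mono)
    then have 2: "(1/cc)\<^sup>2 * (norm_L2 T (D h))\<^sup>2 \<le> (1/cc)\<^sup>2 * (M' * norm_L2 T h)\<^sup>2"
      by (simp add: mult_left_mono)
    show ?thesis using 1 2 by linarith
  qed
  also have "\<dots> = (qq * norm_L2 T h)\<^sup>2"
  proof -
    have "1 - a\<^sup>2 / M'\<^sup>2 \<ge> 0" using qq_def qq M'_ge a_pos by (simp add: power_mono)
    then have q2: "qq\<^sup>2 = 1 - a\<^sup>2 / M'\<^sup>2" by (simp add: qq_def)
    define n where "n = norm_L2 T h"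
    have M0: "M' \<noteq> 0" using M'_ge by simp
    have icc: "1/cc = a / M'\<^sup>2" by (simp add: cc_def)
    have e1: "(a / M'\<^sup>2)\<^sup>2 * (M' * n)\<^sup>2 = a\<^sup>2 * n\<^sup>2 / M'\<^sup>2"
      using M0 by (simp add: power_divide power_mult_distrib power2_eq_square)
    have e2: "2 * (a / M'\<^sup>2) * (a * n\<^sup>2) = 2 * (a\<^sup>2 * n\<^sup>2 / M'\<^sup>2)"
      by (simp add: power2_eq_square)
    have e3: "(qq * n)\<^sup>2 = n\<^sup>2 - a\<^sup>2 * n\<^sup>2 / M'\<^sup>2"
      using q2 by (simp add: power_mult_distrib left_diff_distrib)
    define X where "X = a\<^sup>2 * n\<^sup>2 / M'\<^sup>2"
    show ?thesis unfolding n_def[symmetric] icc e1 e2 e3 X_def[symmetric] by linarith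
  qed
  finally have "(norm_L2 T u)\<^sup>2 \<le> (qq * norm_L2 T h)\<^sup>2" .
  then show ?thesis unfolding u_def[symmetric]
    using power2_le_imp_le[OF _ mult_nonneg_nonneg[OF qq(1) norm_L2_nonneg[of h]]] by blast
qed

end

context coerc begin

lemma D_surj: assumes g: "g \<in> L2 T" shows "\<exists>f\<in>L2 T. AE x in LT T. D f x = g x"
proof -
  define h where "h = rec_nat g (\<lambda>n hn. (\<lambda>x. hn x - (1/cc) * D hn x))"
  have h0: "h 0 = g" by (simp add: h_def)
  have hS: "h (Suc n) = (\<lambda>x. h n x - (1/cc) * D (h n) x)" for n by (simp add: h_def)
  have hL2: "h n \<in> L2 T" for n
  proof (induction n)
    case 0 then show ?case by (simp add: h0 g)
  next
    case (Suc n) then show ?case unfolding hS by (intro L2_diff L2_scale D_L2)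
  qed
  have hn: "norm_L2 T (h n) \<le> qq ^ n * norm_L2 T g" for n
  proof (induction n)
    case 0 then show ?case by (simp add: h0)
  next
    case (Suc n)
    have "norm_L2 T (h (Suc n)) \<le> qq * norm_L2 T (h n)"
      unfolding hS by (rule contraction[OF hL2])
    also have "\<dots> \<le> qq * (qq ^ n * norm_L2 T g)"
      using Suc qq by (intro mult_left_mono) auto
    finally show ?case by simp
  qed
  have sm: "summable (\<lambda>n. norm_L2 T (h n))"
  proof (rule summable_comparison_test'[where N=0])
    show "summable (\<lambda>n. qq ^ n * norm_L2 T g)"
      using qq by (intro summable_mult2 summable_geometric) auto
    show "norm (norm_L2 T (h n)) \<le> qq ^ n * norm_L2 T g" for n
      using hn[of n] norm_L2_nonneg[of "h n"] by simp
  qed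
  obtain F where F: "F \<in> L2 T" and lim: "(\<lambda>N. norm_L2 T (\<lambda>x. F x - (\<Sum>n<N. h n x))) \<longlonglongrightarrow> 0"
    using L2_complete[OF hL2 sm] by blast
  define S where "S N = (\<lambda>x. \<Sum>n<N. h n x)" for N
  have SL2: "S N \<in> L2 T" for N unfolding S_def by (intro L2_sum hL2)
  have DS: "D (S N) x = cc * (g x - h N x)" if x: "x \<in> {0..T}" for N x
  proof (induction N)
    case 0
    have "D (S 0) x = D (\<lambda>y. 0) x" by (simp add: S_def)
    then show ?case using D_zero[OF x] by (simp add: h0)
  next
    case (Suc N)
    have "D (S (Suc N)) x = D (\<lambda>y. S N y + h N y) x" by (simp add: S_def)
    also have "\<dots> = D (S N) x + D (h N) x" by (rule D_add[OF SL2 hL2 x])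
    also have "D (h N) x = cc * (h N x - h (Suc N) x)"
      using cc_pos by (simp add: hS)
    finally show ?case using Suc by (simp add: algebra_simps)
  qed
  define f where "f = (\<lambda>x. (1/cc) * F x)"
  have fL2: "f \<in> L2 T" unfolding f_def by (rule L2_scale[OF F])
  have DfL2: "(\<lambda>x. D f x - g x) \<in> L2 T" by (rule L2_diff[OF D_L2[OF fL2] g])
  have bnd: "norm_L2 T (\<lambda>x. D f x - g x) \<le> (M' / cc) * norm_L2 T (\<lambda>x. F x - (\<Sum>n<N. h n x)) + qq ^ N * norm_L2 T g" for N
  proof -
    define w where "w = (\<lambda>y. F y - S N y)"
    have wL2: "w \<in> L2 T" unfolding w_def by (rule L2_diff[OF F SL2])
    have eq: "D f x - g x = (1/cc) * D w x - h N x" if x: "x \<in> {0..T}" for x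
    proof -
      have "D f x = D (\<lambda>y. (1/cc) * w y + (1/cc) * S N y) x"
        by (rule D_cong[OF _ x]) (simp add: f_def w_def algebra_simps)
      also have "\<dots> = (1/cc) * D w x + (1/cc) * D (S N) x" by (rule D_lin[OF wL2 SL2 x])
      also have "(1/cc) * D (S N) x = g x - h N x" using DS[OF x] cc_pos by simp
      finally show ?thesis by simp
    qed
    have "norm_L2 T (\<lambda>x. D f x - g x) = norm_L2 T (\<lambda>x. (1/cc) * D w x - h N x)"
      by (rule norm_L2_cong) (rule eq)
    also have "\<dots> \<le> norm_L2 T (\<lambda>x. (1/cc) * D w x) + norm_L2 T (h N)"
      by (rule norm_L2_diff_triangle[OF L2_scale[OF D_L2[OF wL2]] hL2])
    also have "norm_L2 T (\<lambda>x. (1/cc) * D w x) = (1/cc) * norm_L2 T (D w)"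
      using cc_pos norm_L2_scale[of "1/cc" "D w"] by simp
    also have "\<dots> \<le> (1/cc) * (M' * norm_L2 T w)"
      using D_bound'[OF wL2] cc_pos by (intro mult_left_mono) auto
    also have "norm_L2 T w = norm_L2 T (\<lambda>x. F x - (\<Sum>n<N. h n x))"
      by (simp add: w_def S_def)
    finally show ?thesis using hn[of N] by (simp add: field_simps)
  qed
  have "(\<lambda>N. (M' / cc) * norm_L2 T (\<lambda>x. F x - (\<Sum>n<N. h n x)) + qq ^ N * norm_L2 T g) \<longlonglongrightarrow> (M'/cc) * 0 + 0 * norm_L2 T g"
    using qq by (intro tendsto_add tendsto_mult tendsto_const lim LIMSEQ_power_zero) auto
  then have "(\<lambda>N. (M' / cc) * norm_L2 T (\<lambda>x. F x - (\<Sum>n<N. h n x)) + qq ^ N * norm_L2 T g) \<longlonglongrightarrow> 0"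
    by simp
  then have "norm_L2 T (\<lambda>x. D f x - g x) \<le> 0"
    by (rule LIMSEQ_le_const) (use bnd in auto)
  then have "norm_L2 T (\<lambda>x. D f x - g x) = 0" using norm_L2_nonneg by (metis order_antisym)
  then have "AE x in LT T. D f x - g x = 0" by (rule norm_L2_zero_AE[OF DfL2])
  then show ?thesis using fL2 by (auto elim: eventually_mono)
qed

end

definition Dgen :: "real \<Rightarrow> real \<Rightarrow> (real \<Rightarrow> real \<Rightarrow> real) \<Rightarrow> real \<Rightarrow> (real \<Rightarrow> real \<Rightarrow> real) \<Rightarrow> (real \<Rightarrow> real) \<Rightarrow> real \<Rightarrow> real" where
  "Dgen T a A b B f = (\<lambda>x. a * f x + kop T A f x + kop T (kadj A) f x + b * kop T (kadj B) (kop T B f) x)"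

context L2T begin

lemma Dgen_parts:
  assumes A: "bker T A CA" and B: "bker T B CB" and f: "f \<in> L2 T"
  shows "kop T A f \<in> L2 T" "kop T (kadj A) f \<in> L2 T" "kop T B f \<in> L2 T" "kop T (kadj B) (kop T B f) \<in> L2 T"
  using kop_L2(1)[OF A f] kop_L2(1)[OF bker_kadj[OF A] f] kop_L2(1)[OF B f]
    kop_L2(1)[OF bker_kadj[OF B] kop_L2(1)[OF B f]] by auto

lemma Dgen_L2: assumes A: "bker T A CA" and B: "bker T B CB" and f: "f \<in> L2 T"
  shows "Dgen T a A b B f \<in> L2 T"
  unfolding Dgen_def using Dgen_parts[OF A B f] f by (intro L2_add L2_scale)

lemma Dgen_bound: assumes A: "bker T A CA" and B: "bker T B CB" and f: "f \<in> L2 T" and a: "a \<ge> 0" and b: "b \<ge> 0"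
  shows "norm_L2 T (Dgen T a A b B f) \<le> (a + 2 * sqrt (CA * T) + b * (sqrt (CB * T) * sqrt (CB * T))) * norm_L2 T f"
proof -
  note P = Dgen_parts[OF A B f]
  have af: "(\<lambda>x. a * f x) \<in> L2 T" using f by (rule L2_scale)
  have bf: "(\<lambda>x. b * kop T (kadj B) (kop T B f) x) \<in> L2 T" using P(4) by (rule L2_scale)
  have n1: "norm_L2 T (\<lambda>x. a * f x) = a * norm_L2 T f" using a by (simp add: norm_L2_scale)
  have n2: "norm_L2 T (kop T A f) \<le> sqrt (CA * T) * norm_L2 T f" by (rule kop_L2(2)[OF A f])
  have n3: "norm_L2 T (kop T (kadj A) f) \<le> sqrt (CA * T) * norm_L2 T f" by (rule kop_L2(2)[OF bker_kadj[OF A] f])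
  have n4: "norm_L2 T (\<lambda>x. b * kop T (kadj B) (kop T B f) x) \<le> b * (sqrt (CB * T) * (sqrt (CB * T) * norm_L2 T f))"
  proof -
    have "norm_L2 T (\<lambda>x. b * kop T (kadj B) (kop T B f) x) = b * norm_L2 T (kop T (kadj B) (kop T B f))"
      using b by (simp add: norm_L2_scale)
    also have "\<dots> \<le> b * (sqrt (CB * T) * norm_L2 T (kop T B f))"
      using b kop_L2(2)[OF bker_kadj[OF B] P(3)] by (intro mult_left_mono) auto
    also have "\<dots> \<le> b * (sqrt (CB * T) * (sqrt (CB * T) * norm_L2 T f))"
      using b kop_L2(2)[OF B f] bker_C[OF B] T_pos by (intro mult_left_mono) auto
    finally show ?thesis .
  qed
  have "norm_L2 T (Dgen T a A b B f) \<le> norm_L2 T (\<lambda>x. a * f x + kop T A f x + kop T (kadj A) f x) + norm_L2 T (\<lambda>x. b * kop T (kadj B) (kop T B f) x)"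
    unfolding Dgen_def by (intro norm_L2_triangle bf L2_add af P)
  also have "norm_L2 T (\<lambda>x. a * f x + kop T A f x + kop T (kadj A) f x) \<le> norm_L2 T (\<lambda>x. a * f x + kop T A f x) + norm_L2 T (kop T (kadj A) f)"
    by (intro norm_L2_triangle L2_add af P)
  also have "norm_L2 T (\<lambda>x. a * f x + kop T A f x) \<le> norm_L2 T (\<lambda>x. a * f x) + norm_L2 T (kop T A f)"
    by (intro norm_L2_triangle af P)
  finally show ?thesis using n1 n2 n3 n4 by (simp add: algebra_simps)
qed

lemma Dgen_cong: assumes "\<And>y. y \<in> {0..T} \<Longrightarrow> f y = g y" "x \<in> {0..T}"
  shows "Dgen T a A b B f x = Dgen T a A b B g x"
proof -
  have "kop T B f = kop T B g" by (rule ext, rule kop_cong) (use assms in auto)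
  moreover have "kop T A f x = kop T A g x" "kop T (kadj A) f x = kop T (kadj A) g x"
    by (rule kop_cong, use assms in auto)+
  ultimately show ?thesis unfolding Dgen_def using assms by simp
qed

lemma Dgen_lin: assumes A: "bker T A CA" and B: "bker T B CB" and f: "f \<in> L2 T" and g: "g \<in> L2 T" and x: "x \<in> {0..T}"
  shows "Dgen T a A b B (\<lambda>y. \<alpha> * f y + \<beta> * g y) x = \<alpha> * Dgen T a A b B f x + \<beta> * Dgen T a A b B g x"
proof -
  have "kop T (kadj B) (kop T B (\<lambda>y. \<alpha> * f y + \<beta> * g y)) x = kop T (kadj B) (\<lambda>y. \<alpha> * kop T B f y + \<beta> * kop T B g y) x"
    by (rule kop_cong) (rule kop_lin[OF B f g])
  also have "\<dots> = \<alpha> * kop T (kadj B) (kop T B f) x + \<beta> * kop T (kadj B) (kop T B g) x"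
    by (rule kop_lin[OF bker_kadj[OF B] kop_L2(1)[OF B f] kop_L2(1)[OF B g] x])
  finally have 1: "kop T (kadj B) (kop T B (\<lambda>y. \<alpha> * f y + \<beta> * g y)) x = \<alpha> * kop T (kadj B) (kop T B f) x + \<beta> * kop T (kadj B) (kop T B g) x" .
  show ?thesis unfolding Dgen_def 1 kop_lin[OF A f g x] kop_lin[OF bker_kadj[OF A] f g x]
    by (simp add: algebra_simps)
qed

lemma Dgen_inner: assumes A: "bker T A CA" and B: "bker T B CB" and f: "f \<in> L2 T" and g: "g \<in> L2 T"
  shows "inner_L2 T (Dgen T a A b B f) g = a * inner_L2 T f g + inner_L2 T (kop T A f) g + inner_L2 T (kop T (kadj A) f) g
     + b * inner_L2 T (kop T B f) (kop T B g)"
proof -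
  note P = Dgen_parts[OF A B f]
  have af: "(\<lambda>x. a * f x) \<in> L2 T" using f by (rule L2_scale)
  have bf: "(\<lambda>x. b * kop T (kadj B) (kop T B f) x) \<in> L2 T" using P(4) by (rule L2_scale)
  have "inner_L2 T (Dgen T a A b B f) g = inner_L2 T (\<lambda>x. a * f x + kop T A f x + kop T (kadj A) f x) g + inner_L2 T (\<lambda>x. b * kop T (kadj B) (kop T B f) x) g"
    unfolding Dgen_def by (intro inner_L2_add_left L2_add af P bf g)
  also have "inner_L2 T (\<lambda>x. a * f x + kop T A f x + kop T (kadj A) f x) g = inner_L2 T (\<lambda>x. a * f x + kop T A f x) g + inner_L2 T (kop T (kadj A) f) g"
    by (intro inner_L2_add_left L2_add af P g)
  also have "inner_L2 T (\<lambda>x. a * f x + kop T A f x) g = inner_L2 T (\<lambda>x. a * f x) g + inner_L2 T (kop T A f) g"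
    by (intro inner_L2_add_left af P g)
  also have "inner_L2 T (\<lambda>x. b * kop T (kadj B) (kop T B f) x) g = b * inner_L2 T (kop T B f) (kop T B g)"
    using kop_adj[OF bker_kadj[OF B] P(3) g] by (simp add: inner_L2_scale_left)
  finally show ?thesis by (simp add: inner_L2_scale_left)
qed

lemma Dgen_sym: assumes A: "bker T A CA" and B: "bker T B CB" and f: "f \<in> L2 T" and g: "g \<in> L2 T"
  shows "inner_L2 T (Dgen T a A b B f) g = inner_L2 T f (Dgen T a A b B g)"
proof -
  have "inner_L2 T f (Dgen T a A b B g) = inner_L2 T (Dgen T a A b B g) f" by (rule inner_L2_comm)
  also have "\<dots> = a * inner_L2 T g f + inner_L2 T (kop T A g) f + inner_L2 T (kop T (kadj A) g) f
     + b * inner_L2 T (kop T B g) (kop T B f)" by (rule Dgen_inner[OF A B g f])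
  also have "inner_L2 T (kop T A g) f = inner_L2 T (kop T (kadj A) f) g"
    using kop_adj[OF A g f] by (simp add: inner_L2_comm)
  also have "inner_L2 T (kop T (kadj A) g) f = inner_L2 T (kop T A f) g"
    using kop_adj[OF bker_kadj[OF A] g f] by (simp add: inner_L2_comm)
  finally show ?thesis using Dgen_inner[OF A B f g] by (simp add: inner_L2_comm)
qed

lemma Dgen_coerc:
  assumes A: "bker T A CA" and B: "bker T B CB" and a: "a > 0" and b: "b \<ge> 0"
    and pos: "\<And>f. f \<in> L2 T \<Longrightarrow> inner_L2 T (kop T A f) f + inner_L2 T (kop T (kadj A) f) f \<ge> 0"
  shows "coerc T (Dgen T a A b B) a (a + 2 * sqrt (CA * T) + b * (sqrt (CB * T) * sqrt (CB * T)))"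
proof (unfold_locales)
  show "a > 0" by fact
  show "\<And>f. f \<in> L2 T \<Longrightarrow> Dgen T a A b B f \<in> L2 T" by (rule Dgen_L2[OF A B])
  show "\<And>f. f \<in> L2 T \<Longrightarrow> norm_L2 T (Dgen T a A b B f) \<le> (a + 2 * sqrt (CA * T) + b * (sqrt (CB * T) * sqrt (CB * T))) * norm_L2 T f"
    using a b by (intro Dgen_bound[OF A B]) auto
  show "\<And>f g \<alpha> \<beta> x. f \<in> L2 T \<Longrightarrow> g \<in> L2 T \<Longrightarrow> x \<in> {0..T} \<Longrightarrow>
      Dgen T a A b B (\<lambda>y. \<alpha> * f y + \<beta> * g y) x = \<alpha> * Dgen T a A b B f x + \<beta> * Dgen T a A b B g x"
    by (rule Dgen_lin[OF A B])
  show "\<And>f g x. (\<And>y. y \<in> {0..T} \<Longrightarrow> f y = g y) \<Longrightarrow> x \<in> {0..T} \<Longrightarrow> Dgen T a A b B f x = Dgen T a A b B g x"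
    by (rule Dgen_cong)
  fix f assume f: "f \<in> L2 T"
  have "inner_L2 T (Dgen T a A b B f) f = a * (norm_L2 T f)\<^sup>2 + (inner_L2 T (kop T A f) f + inner_L2 T (kop T (kadj A) f) f)
     + b * (norm_L2 T (kop T B f))\<^sup>2"
    using Dgen_inner[OF A B f f] by (simp add: inner_L2_self)
  moreover have "b * (norm_L2 T (kop T B f))\<^sup>2 \<ge> 0" using b by simp
  ultimately show "a * (norm_L2 T f)\<^sup>2 \<le> inner_L2 T (Dgen T a A b B f) f" using pos[OF f] by linarith
qed

end

context L2T begin

lemma meas_pair_id: "(\<lambda>p. p) \<in> (LT T \<Otimes>\<^sub>M LT T) \<rightarrow>\<^sub>M (borel :: (real \<times> real) measure)"
proof -
  have i: "(\<lambda>x::real. x) \<in> LT T \<rightarrow>\<^sub>M borel" using id_borel_measurable_lebesgue_on by (simp add: id_def)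
  have "(\<lambda>p. (fst p, snd p)) \<in> (LT T \<Otimes>\<^sub>M LT T) \<rightarrow>\<^sub>M (borel \<Otimes>\<^sub>M borel)"
    by (intro measurable_Pair measurable_compose[OF measurable_fst i] measurable_compose[OF measurable_snd i])
  then show ?thesis by (simp add: borel_prod)
qed

lemma Gs_exists:
  assumes kc: "kernel_class T G"
  shows "\<exists>Gs C. bker T Gs C \<and> (\<forall>x\<in>{0..T}. \<forall>y\<in>{0..T}. \<not> y < x \<longrightarrow> Gs x y = 0) \<and>
     (AE x in LT T. AE y in LT T. G x y = Gs x y) \<and> (AE y in LT T. AE x in LT T. G x y = Gs x y)"
proof -
  have meas: "(\<lambda>(t, s). G t s) \<in> borel_measurable (lebesgue_on ({0..T} \<times> {0..T}))"
    and volt: "volterra T G" using kc by (auto simp: kernel_class_def)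
  obtain C0 where C0r: "\<And>t. t \<in> {0..T} \<Longrightarrow> (\<integral>\<^sup>+ s. ennreal ((G t s)\<^sup>2) \<partial>LT T) \<le> ennreal C0"
    and C0c: "\<And>s. s \<in> {0..T} \<Longrightarrow> (\<integral>\<^sup>+ t. ennreal ((G t s)\<^sup>2) \<partial>LT T) \<le> ennreal C0"
    using kc unfolding kernel_class_def by blast
  define C where "C = max C0 0"
  have C: "C \<ge> 0" "ennreal C0 \<le> ennreal C" by (auto simp: C_def ennreal_leI)
  define S2 where "S2 = ({0..T} \<times> {0..T} :: (real \<times> real) set)"
  have "closed S2" by (simp add: S2_def closed_Times)
  then have "S2 \<in> sets borel" by (rule borel_closed)
  then have S2: "S2 \<in> sets lebesgue" by (intro sets_completionI_sets) simp
  have "(\<lambda>p. if p \<in> S2 then (\<lambda>(t, s). G t s) p else 0) \<in> borel_measurable lebesgue"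
    using borel_measurable_if[OF S2] meas unfolding S2_def by blast
  then obtain g2 where g2: "g2 \<in> borel_measurable lborel"
    and ae2: "AE p in lborel. (if p \<in> S2 then (\<lambda>(t, s). G t s) p else 0) = g2 p"
    using completion_ex_borel_measurable_real by blast
  obtain N where N: "{p \<in> space lborel. \<not> ((if p \<in> S2 then (\<lambda>(t, s). G t s) p else 0) = g2 p)} \<subseteq> N"
    "emeasure lborel N = 0" "N \<in> sets lborel"
    using ae2 by (rule AE_E)
  have GN: "G x y = g2 (x, y)" if "x \<in> {0..T}" "y \<in> {0..T}" "(x, y) \<notin> N" for x y
  proof -
    have "(x, y) \<in> S2" using that by (simp add: S2_def)
    moreover have "(x, y) \<notin> {p \<in> space lborel. \<not> ((if p \<in> S2 then (\<lambda>(t, s). G t s) p else 0) = g2 p)}"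
      using N(1) that(3) by blast
    ultimately show ?thesis by simp
  qed
  have Qpsf: "pair_sigma_finite (lborel::real measure) (lborel::real measure)"
    unfolding pair_sigma_finite_def by (simp add: lborel.sigma_finite_measure_axioms)
  have Nsets: "N \<in> sets (lborel \<Otimes>\<^sub>M lborel)" using N(3) by (simp only: lborel_prod)
  have Nnull: "emeasure (lborel \<Otimes>\<^sub>M lborel) N = 0" using N(2) by (simp only: lborel_prod)
  have aeP: "AE p in (lborel \<Otimes>\<^sub>M (lborel :: real measure)). p \<notin> N"
    using Nsets Nnull by (intro AE_I'[where N=N]) auto
  have Pset: "{p \<in> space (lborel \<Otimes>\<^sub>M (lborel :: real measure)). (fst p, snd p) \<notin> N} \<in> sets (lborel \<Otimes>\<^sub>M lborel)"
  proof -
    have "{p \<in> space (lborel \<Otimes>\<^sub>M (lborel :: real measure)). (fst p, snd p) \<notin> N} = space (lborel \<Otimes>\<^sub>M lborel) - N"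
      by auto
    then show ?thesis using sets.compl_sets[OF Nsets] by metis
  qed
  have r0: "AE x in lborel. AE y in lborel. (x, y) \<notin> N"
    using pair_sigma_finite.AE_pair[OF Qpsf aeP] by simp
  have c0: "AE y in lborel. AE x in lborel. (x, y) \<notin> N"
    using r0 pair_sigma_finite.AE_commute[OF Qpsf Pset] by simp
  have "AE x in lborel. AE y in LT T. (x, y) \<notin> N" using r0 by (rule eventually_mono) (rule AE_lborel_LT)
  then have r: "AE x in LT T. AE y in LT T. (x, y) \<notin> N" by (rule AE_lborel_LT)
  have "AE y in lborel. AE x in LT T. (x, y) \<notin> N" using c0 by (rule eventually_mono) (rule AE_lborel_LT)
  then have c: "AE y in LT T. AE x in LT T. (x, y) \<notin> N" by (rule AE_lborel_LT)
  have g2m[measurable]: "g2 \<in> borel_measurable (LT T \<Otimes>\<^sub>M LT T)"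
    using measurable_compose[OF meas_pair_id, of g2 borel] g2 by simp
  have idm: "(\<lambda>x::real. x) \<in> borel_measurable (LT T)" using id_borel_measurable_lebesgue_on by (simp add: id_def)
  have fstm[measurable]: "fst \<in> borel_measurable (LT T \<Otimes>\<^sub>M LT T)"
    by (rule measurable_compose[OF measurable_fst idm])
  have sndm[measurable]: "snd \<in> borel_measurable (LT T \<Otimes>\<^sub>M LT T)"
    by (rule measurable_compose[OF measurable_snd idm])
  define rb where "rb x \<longleftrightarrow> (\<integral>\<^sup>+y. ennreal ((g2 (x, y))\<^sup>2) \<partial>LT T) \<le> ennreal C" for x
  define cb where "cb y \<longleftrightarrow> (\<integral>\<^sup>+x. ennreal ((g2 (x, y))\<^sup>2) \<partial>LT T) \<le> ennreal C" for y
  have m1: "(\<lambda>x. \<integral>\<^sup>+y. ennreal ((g2 (x, y))\<^sup>2) \<partial>LT T) \<in> borel_measurable (LT T)"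
    by (rule M.borel_measurable_nn_integral) (simp add: case_prod_beta)
  have m2: "(\<lambda>y. \<integral>\<^sup>+x. ennreal ((g2 (x, y))\<^sup>2) \<partial>LT T) \<in> borel_measurable (LT T)"
  proof -
    have "(\<lambda>p. g2 (snd p, fst p)) \<in> borel_measurable (LT T \<Otimes>\<^sub>M LT T)"
      using measurable_compose[OF measurable_pair_swap' g2m] by (simp add: case_prod_beta)
    then have "case_prod (\<lambda>y x. ennreal ((g2 (x, y))\<^sup>2)) \<in> borel_measurable (LT T \<Otimes>\<^sub>M LT T)"
      by (simp add: case_prod_beta)
    then show ?thesis by (rule M.borel_measurable_nn_integral)
  qed
  have rbm[measurable]: "Measurable.pred (LT T) rb" unfolding rb_def using m1 by measurable
  have cbm[measurable]: "Measurable.pred (LT T) cb" unfolding cb_def using m2 by measurable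
  define Gs where "Gs x y = (if rb x \<and> cb y \<and> y < x then g2 (x, y) else 0)" for x y
  have Gsm: "(\<lambda>p. Gs (fst p) (snd p)) \<in> borel_measurable (LT T \<Otimes>\<^sub>M LT T)"
    unfolding Gs_def by measurable
  have rowb: "(\<integral>\<^sup>+y. ennreal ((Gs x y)\<^sup>2) \<partial>LT T) \<le> ennreal C" for x
  proof (cases "rb x")
    case True
    have "(\<integral>\<^sup>+y. ennreal ((Gs x y)\<^sup>2) \<partial>LT T) \<le> (\<integral>\<^sup>+y. ennreal ((g2 (x, y))\<^sup>2) \<partial>LT T)"
      by (intro nn_integral_mono) (auto simp: Gs_def)
    then show ?thesis using True rb_def by (meson order_trans)
  next
    case False then show ?thesis by (simp add: Gs_def)
  qed
  have colb: "(\<integral>\<^sup>+x. ennreal ((Gs x y)\<^sup>2) \<partial>LT T) \<le> ennreal C" for y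
  proof (cases "cb y")
    case True
    have "(\<integral>\<^sup>+x. ennreal ((Gs x y)\<^sup>2) \<partial>LT T) \<le> (\<integral>\<^sup>+x. ennreal ((g2 (x, y))\<^sup>2) \<partial>LT T)"
      by (intro nn_integral_mono) (auto simp: Gs_def)
    then show ?thesis using True cb_def by (meson order_trans)
  next
    case False then show ?thesis by (simp add: Gs_def)
  qed
  have bk: "bker T Gs C" unfolding bker_def using C(1) Gsm rowb colb by auto
  have vGs: "\<forall>x\<in>{0..T}. \<forall>y\<in>{0..T}. \<not> y < x \<longrightarrow> Gs x y = 0" by (simp add: Gs_def)
  have rbae: "AE x in LT T. rb x"
    using r AE_LT_space
  proof (eventually_elim)
    case (elim x)
    have "AE y in LT T. ennreal ((g2 (x, y))\<^sup>2) = ennreal ((G x y)\<^sup>2)"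
      using elim(1) AE_LT_space by eventually_elim (use GN elim(2) in auto)
    then have "(\<integral>\<^sup>+y. ennreal ((g2 (x, y))\<^sup>2) \<partial>LT T) = (\<integral>\<^sup>+y. ennreal ((G x y)\<^sup>2) \<partial>LT T)"
      by (rule nn_integral_cong_AE)
    also have "\<dots> \<le> ennreal C" using C0r[OF elim(2)] C(2) by (meson order_trans)
    finally show ?case by (simp add: rb_def)
  qed
  have cbae: "AE y in LT T. cb y"
    using c AE_LT_space
  proof (eventually_elim)
    case (elim y)
    have "AE x in LT T. ennreal ((g2 (x, y))\<^sup>2) = ennreal ((G x y)\<^sup>2)"
      using elim(1) AE_LT_space by eventually_elim (use GN elim(2) in auto)
    then have "(\<integral>\<^sup>+x. ennreal ((g2 (x, y))\<^sup>2) \<partial>LT T) = (\<integral>\<^sup>+x. ennreal ((G x y)\<^sup>2) \<partial>LT T)"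
      by (rule nn_integral_cong_AE)
    also have "\<dots> \<le> ennreal C" using C0c[OF elim(2)] C(2) by (meson order_trans)
    finally show ?case by (simp add: cb_def)
  qed
  have eqpt: "G x y = Gs x y" if "x \<in> {0..T}" "y \<in> {0..T}" "(x, y) \<notin> N" "rb x" "cb y" for x y
  proof (cases "y < x")
    case True then show ?thesis using GN that by (simp add: Gs_def)
  next
    case False
    then have "G x y = 0" using volt that unfolding volterra_def by auto
    then show ?thesis using False by (simp add: Gs_def)
  qed
  have aer: "AE x in LT T. AE y in LT T. G x y = Gs x y"
    using r rbae AE_LT_space
  proof eventually_elim
    case (elim x)
    show ?case using elim(1) cbae AE_LT_space by eventually_elim (use eqpt elim in auto)
  qed
  have aec: "AE y in LT T. AE x in LT T. G x y = Gs x y"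
    using c cbae AE_LT_space
  proof eventually_elim
    case (elim y)
    show ?case using elim(1) rbae AE_LT_space by eventually_elim (use eqpt elim in auto)
  qed
  show ?thesis using bk vGs aer aec by blast
qed

end

context L2T begin

lemma idm: "(\<lambda>x::real. x) \<in> borel_measurable (LT T)" using id_borel_measurable_lebesgue_on by (simp add: id_def)
lemma fstm[measurable]: "fst \<in> borel_measurable (LT T \<Otimes>\<^sub>M LT T)"
  by (rule measurable_compose[OF measurable_fst idm])
lemma sndm[measurable]: "snd \<in> borel_measurable (LT T \<Otimes>\<^sub>M LT T)"
  by (rule measurable_compose[OF measurable_snd idm])

lemma nonneg_transfer:
  assumes nd: "nonneg_definite T G" and bk: "bker T Gs C"
    and aer: "AE x in LT T. AE y in LT T. G x y = Gs x y"
    and aec: "AE y in LT T. AE x in LT T. G x y = Gs x y"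
    and h: "h \<in> L2 T"
  shows "0 \<le> (\<integral>x. (\<integral>y. (Gs x y + Gs y x) * h y * h x \<partial>LT T) \<partial>LT T)"
proof -
  have hm[measurable]: "h \<in> borel_measurable (LT T)" using h by (rule L2_meas)
  have m1[measurable]: "(\<lambda>p. Gs (fst p) (snd p)) \<in> borel_measurable (LT T \<Otimes>\<^sub>M LT T)" by (rule bker_meas[OF bk])
  have m2[measurable]: "(\<lambda>p. Gs (snd p) (fst p)) \<in> borel_measurable (LT T \<Otimes>\<^sub>M LT T)"
    using bker_meas[OF bker_kadj[OF bk]] by (simp add: kadj_def)
  have "case_prod (\<lambda>x y. (Gs x y + Gs y x) * h y * h x) \<in> borel_measurable (LT T \<Otimes>\<^sub>M LT T)"
    unfolding case_prod_beta by measurable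
  then have outm: "(\<lambda>x. \<integral>y. (Gs x y + Gs y x) * h y * h x \<partial>LT T) \<in> borel_measurable (LT T)"
    by (rule M.borel_measurable_lebesgue_integral)
  have "AE x in LT T. (\<integral>y. (G x y + G y x) * h y * h x \<partial>LT T) = (\<integral>y. (Gs x y + Gs y x) * h y * h x \<partial>LT T)"
    using aer aec AE_LT_space
  proof eventually_elim
    case (elim x)
    have "(\<lambda>y. Gs x y) \<in> borel_measurable (LT T)" "(\<lambda>y. Gs y x) \<in> borel_measurable (LT T)"
      using bker_row(1)[OF bk elim(3)] bker_col(1)[OF bk elim(3)] by (auto intro: L2_meas)
    then have "(\<lambda>y. (Gs x y + Gs y x) * h y * h x) \<in> borel_measurable (LT T)" by measurable
    moreover have "AE y in LT T. (Gs x y + Gs y x) * h y * h x = (G x y + G y x) * h y * h x"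
      using elim(1,2) by eventually_elim simp
    ultimately show ?case by (rule integral_AE_cong)
  qed
  then have "(\<integral>x. (\<integral>y. (G x y + G y x) * h y * h x \<partial>LT T) \<partial>LT T) = (\<integral>x. (\<integral>y. (Gs x y + Gs y x) * h y * h x \<partial>LT T) \<partial>LT T)"
    using outm by (intro integral_AE_cong) (auto elim: eventually_mono)
  moreover have "0 \<le> (\<integral>x. (\<integral>y. (G x y + G y x) * h y * h x \<partial>LT T) \<partial>LT T)"
    using nd h unfolding nonneg_definite_def by blast
  ultimately show ?thesis by simp
qed

lemma bker_bounded:
  assumes m: "(\<lambda>p. K (fst p) (snd p)) \<in> borel_measurable (LT T \<Otimes>\<^sub>M LT T)" and b: "\<And>x y. \<bar>K x y\<bar> \<le> B"
  shows "bker T K (B\<^sup>2 * T)"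
proof -
  have B: "B \<ge> 0" using b[of 0 0] by simp
  have sq: "(K x y)\<^sup>2 \<le> B\<^sup>2" for x y using b[of x y] by (metis abs_ge_zero power2_abs power_mono)
  have I: "(\<integral>\<^sup>+y. ennreal ((K x y)\<^sup>2) \<partial>LT T) \<le> ennreal (B\<^sup>2 * T)" for x
  proof -
    have "(\<integral>\<^sup>+y. ennreal ((K x y)\<^sup>2) \<partial>LT T) \<le> (\<integral>\<^sup>+y. ennreal (B\<^sup>2) \<partial>LT T)"
      by (intro nn_integral_mono ennreal_leI sq)
    also have "\<dots> = ennreal (B\<^sup>2) * ennreal T" using emeasure_LT[of T] T_pos by simp
    finally show ?thesis using T_pos by (simp add: ennreal_mult)
  qed
  have J: "(\<integral>\<^sup>+x. ennreal ((K x y)\<^sup>2) \<partial>LT T) \<le> ennreal (B\<^sup>2 * T)" for y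
  proof -
    have "(\<integral>\<^sup>+x. ennreal ((K x y)\<^sup>2) \<partial>LT T) \<le> (\<integral>\<^sup>+x. ennreal (B\<^sup>2) \<partial>LT T)"
      by (intro nn_integral_mono ennreal_leI sq)
    also have "\<dots> = ennreal (B\<^sup>2) * ennreal T" using emeasure_LT[of T] T_pos by simp
    finally show ?thesis using T_pos by (simp add: ennreal_mult)
  qed
  show ?thesis unfolding bker_def using m I J T_pos by auto
qed

lemma bker_sum_bound:
  assumes k1: "bker T K1 C1" and k2: "bker T K2 C2"
    and m: "(\<lambda>p. K (fst p) (snd p)) \<in> borel_measurable (LT T \<Otimes>\<^sub>M LT T)"
    and b: "\<And>x y. \<bar>K x y\<bar> \<le> \<bar>K1 x y\<bar> + \<bar>K2 x y\<bar>"
  shows "bker T K (2 * C1 + 2 * C2)"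
proof -
  have C: "C1 \<ge> 0" "C2 \<ge> 0" using k1 k2 by (auto simp: bker_def)
  have sq: "ennreal ((K x y)\<^sup>2) \<le> 2 * ennreal ((K1 x y)\<^sup>2) + 2 * ennreal ((K2 x y)\<^sup>2)" for x y
  proof -
    have "(K x y)\<^sup>2 \<le> (\<bar>K1 x y\<bar> + \<bar>K2 x y\<bar>)\<^sup>2" using b[of x y] by (metis abs_ge_zero power2_abs power_mono)
    also have "\<dots> \<le> 2 * (K1 x y)\<^sup>2 + 2 * (K2 x y)\<^sup>2"
      using sum_squares_bound[of "\<bar>K1 x y\<bar>" "\<bar>K2 x y\<bar>"] by (simp add: power2_sum)
    finally have "ennreal ((K x y)\<^sup>2) \<le> ennreal (2 * (K1 x y)\<^sup>2 + 2 * (K2 x y)\<^sup>2)" by (rule ennreal_leI)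
    also have "\<dots> = 2 * ennreal ((K1 x y)\<^sup>2) + 2 * ennreal ((K2 x y)\<^sup>2)"
      by (simp add: ennreal_plus ennreal_mult)
    finally show ?thesis .
  qed
  have m1[measurable]: "(\<lambda>p. K1 (fst p) (snd p)) \<in> borel_measurable (LT T \<Otimes>\<^sub>M LT T)" using k1 by (rule bker_meas)
  have m2[measurable]: "(\<lambda>p. K2 (fst p) (snd p)) \<in> borel_measurable (LT T \<Otimes>\<^sub>M LT T)" using k2 by (rule bker_meas)
  have R: "(\<integral>\<^sup>+y. ennreal ((K x y)\<^sup>2) \<partial>LT T) \<le> ennreal (2 * C1 + 2 * C2)" if x: "x \<in> {0..T}" for x
  proof -
    have [measurable]: "(\<lambda>y. K1 x y) \<in> borel_measurable (LT T)" "(\<lambda>y. K2 x y) \<in> borel_measurable (LT T)"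
      using bker_row(1)[OF k1 x] bker_row(1)[OF k2 x] by (auto intro: L2_meas)
    have "(\<integral>\<^sup>+y. ennreal ((K x y)\<^sup>2) \<partial>LT T) \<le> (\<integral>\<^sup>+y. 2 * ennreal ((K1 x y)\<^sup>2) + 2 * ennreal ((K2 x y)\<^sup>2) \<partial>LT T)"
      by (intro nn_integral_mono sq)
    also have "\<dots> = 2 * (\<integral>\<^sup>+y. ennreal ((K1 x y)\<^sup>2) \<partial>LT T) + 2 * (\<integral>\<^sup>+y. ennreal ((K2 x y)\<^sup>2) \<partial>LT T)"
      by (simp add: nn_integral_add nn_integral_cmult)
    also have "\<dots> \<le> 2 * ennreal C1 + 2 * ennreal C2"
      using k1 k2 x unfolding bker_def by (intro add_mono mult_left_mono) auto
    also have "\<dots> = ennreal (2 * C1 + 2 * C2)" using C by (simp add: ennreal_plus ennreal_mult)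
    finally show ?thesis .
  qed
  have Cc: "(\<integral>\<^sup>+x. ennreal ((K x y)\<^sup>2) \<partial>LT T) \<le> ennreal (2 * C1 + 2 * C2)" if y: "y \<in> {0..T}" for y
  proof -
    have [measurable]: "(\<lambda>x. K1 x y) \<in> borel_measurable (LT T)" "(\<lambda>x. K2 x y) \<in> borel_measurable (LT T)"
      using bker_col(1)[OF k1 y] bker_col(1)[OF k2 y] by (auto intro: L2_meas)
    have "(\<integral>\<^sup>+x. ennreal ((K x y)\<^sup>2) \<partial>LT T) \<le> (\<integral>\<^sup>+x. 2 * ennreal ((K1 x y)\<^sup>2) + 2 * ennreal ((K2 x y)\<^sup>2) \<partial>LT T)"
      by (intro nn_integral_mono sq)
    also have "\<dots> = 2 * (\<integral>\<^sup>+x. ennreal ((K1 x y)\<^sup>2) \<partial>LT T) + 2 * (\<integral>\<^sup>+x. ennreal ((K2 x y)\<^sup>2) \<partial>LT T)"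
      by (simp add: nn_integral_add nn_integral_cmult)
    also have "\<dots> \<le> 2 * ennreal C1 + 2 * ennreal C2"
      using k1 k2 y unfolding bker_def by (intro add_mono mult_left_mono) auto
    also have "\<dots> = ennreal (2 * C1 + 2 * C2)" using C by (simp add: ennreal_plus ennreal_mult)
    finally show ?thesis .
  qed
  show ?thesis unfolding bker_def using C m R Cc by auto
qed

end

context L2T begin

lemma bker_one: "bker T (one_kernel t) (1\<^sup>2 * T)"
proof (rule bker_bounded)
  show "(\<lambda>p. one_kernel t (fst p) (snd p)) \<in> borel_measurable (LT T \<Otimes>\<^sub>M LT T)"
    unfolding one_kernel_def by measurable
  show "\<bar>one_kernel t x y\<bar> \<le> 1" for x y by (simp add: one_kernel_def)
qed

lemma bker_A: assumes bk: "bker T Gs C"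
  shows "bker T (Gt_kernel \<rho> Gs t) (2 * ((2 * \<bar>\<rho>\<bar>)\<^sup>2 * T) + 2 * C)"
proof (rule bker_sum_bound)
  show "bker T (\<lambda>x y. 2 * \<rho> * (if y < x then 1 else 0)) ((2 * \<bar>\<rho>\<bar>)\<^sup>2 * T)"
  proof (rule bker_bounded)
    show "(\<lambda>p. 2 * \<rho> * (if snd p < fst p then 1 else 0)) \<in> borel_measurable (LT T \<Otimes>\<^sub>M LT T)"
      by measurable
    show "\<bar>2 * \<rho> * (if y < x then 1 else 0)\<bar> \<le> 2 * \<bar>\<rho>\<bar>" for x y by (simp add: abs_mult)
  qed
  show "bker T Gs C" by fact
  have [measurable]: "(\<lambda>p. Gs (fst p) (snd p)) \<in> borel_measurable (LT T \<Otimes>\<^sub>M LT T)" by (rule bker_meas[OF bk])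
  show "(\<lambda>p. Gt_kernel \<rho> Gs t (fst p) (snd p)) \<in> borel_measurable (LT T \<Otimes>\<^sub>M LT T)"
    unfolding Gt_kernel_def Gtilde_def by measurable
  show "\<bar>Gt_kernel \<rho> Gs t x y\<bar> \<le> \<bar>2 * \<rho> * (if y < x then 1 else 0)\<bar> + \<bar>Gs x y\<bar>" for x y
    unfolding Gt_kernel_def Gtilde_def by (auto simp: abs_mult)
qed

lemma L2_ind: assumes f: "f \<in> L2 T" shows "(\<lambda>x. f x * (if x \<ge> t then 1 else 0)) \<in> L2 T"
proof (rule L2I)
  have [measurable]: "f \<in> borel_measurable (LT T)" using f by (rule L2_meas)
  have [measurable]: "(\<lambda>x::real. x) \<in> borel_measurable (LT T)" by (rule idm)
  show m: "(\<lambda>x. f x * (if x \<ge> t then 1 else 0)) \<in> borel_measurable (LT T)" by measurable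
  show "integrable (LT T) (\<lambda>x. (f x * (if x \<ge> t then 1 else 0))\<^sup>2)"
    using L2_sq[OF f] by (rule Bochner_Integration.integrable_bound) (use m in auto)
qed

lemma A_pos:
  assumes bk: "bker T Gs C" and vGs: "\<forall>x\<in>{0..T}. \<forall>y\<in>{0..T}. \<not> y < x \<longrightarrow> Gs x y = 0"
    and nd: "\<And>h. h \<in> L2 T \<Longrightarrow> 0 \<le> (\<integral>x. (\<integral>y. (Gs x y + Gs y x) * h y * h x \<partial>LT T) \<partial>LT T)"
    and rho: "\<rho> \<ge> 0" and f: "f \<in> L2 T"
  shows "0 \<le> inner_L2 T (kop T (Gt_kernel \<rho> Gs t) f) f + inner_L2 T (kop T (kadj (Gt_kernel \<rho> Gs t)) f) f"
proof -
  define A where "A = Gt_kernel \<rho> Gs t"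
  have bA: "bker T A (2 * ((2 * \<bar>\<rho>\<bar>)\<^sup>2 * T) + 2 * C)" unfolding A_def by (rule bker_A[OF bk])
  define g where "g x = f x * (if x \<ge> t then 1 else 0)" for x
  have gL2: "g \<in> L2 T" unfolding g_def[abs_def] by (rule L2_ind[OF f])
  have gm[measurable]: "g \<in> borel_measurable (LT T)" using gL2 by (rule L2_meas)
  have gi: "integrable (LT T) g" using gL2 by (rule L2_int)
  define Q where "Q x = (\<integral>y. (Gs x y + Gs y x) * g y * g x \<partial>LT T)" for x
  have Qeq: "Q x = (kop T Gs g x + kop T (kadj Gs) g x) * g x" if x: "x \<in> {0..T}" for x
  proof -
    have "Q x = (\<integral>y. (Gs x y * g y + kadj Gs x y * g y) * g x \<partial>LT T)"
      unfolding Q_def by (simp add: kadj_def algebra_simps)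
    also have "\<dots> = (\<integral>y. Gs x y * g y + kadj Gs x y * g y \<partial>LT T) * g x" by simp
    also have "(\<integral>y. Gs x y * g y + kadj Gs x y * g y \<partial>LT T) = kop T Gs g x + kop T (kadj Gs) g x"
      unfolding kop_def using kop_int[OF bk gL2 x] kop_int[OF bker_kadj[OF bk] gL2 x] by simp
    finally show ?thesis .
  qed
  have Qi: "integrable (LT T) Q"
  proof -
    have "integrable (LT T) (\<lambda>x. (kop T Gs g x + kop T (kadj Gs) g x) * g x)"
      by (intro L2_int_mult L2_add kop_L2(1)[OF bk gL2] kop_L2(1)[OF bker_kadj[OF bk] gL2] gL2)
    then show ?thesis by (rule Bochner_Integration.integrable_cong[THEN iffD1, rotated -1]) (auto simp: Qeq)
  qed
  have pt: "(A x y + A y x) * f y * f x = 2 * \<rho> * ((if y < x then 1 else 0) + (if x < y then 1 else 0)) * g y * g x + (Gs x y + Gs y x) * g y * g x"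
    if x: "x \<in> {0..T}" and y: "y \<in> {0..T}" for x y
  proof -
    have v1: "\<not> y < x \<Longrightarrow> Gs x y = 0" using vGs x y by blast
    have v2: "\<not> x < y \<Longrightarrow> Gs y x = 0" using vGs x y by blast
    show ?thesis unfolding A_def Gt_kernel_def Gtilde_def g_def
      using v1 v2 by (cases "y < x"; cases "x < y"; cases "t \<le> x"; cases "t \<le> y") (auto simp: algebra_simps)
  qed
  have inner_eq: "(kop T A f x + kop T (kadj A) f x) * f x = 2 * \<rho> * (\<integral>y. g y \<partial>LT T) * g x + Q x" if x: "x \<in> {0..T}" for x
  proof -
    have i1: "integrable (LT T) (\<lambda>y. 2 * \<rho> * ((if y < x then 1 else 0) + (if x < y then 1 else 0)) * g y * g x)"
    proof -
      have [measurable]: "(\<lambda>x::real. x) \<in> borel_measurable (LT T)" by (rule idm)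
      have "integrable (LT T) (\<lambda>y. (2 * \<rho> * 2 * \<bar>g x\<bar>) * \<bar>g y\<bar>)" using gi by auto
      then show ?thesis by (rule Bochner_Integration.integrable_bound) (auto simp: abs_mult)
    qed
    have i2: "integrable (LT T) (\<lambda>y. (Gs x y + Gs y x) * g y * g x)"
    proof -
      have "(\<lambda>y. Gs x y + Gs y x) \<in> L2 T" by (intro L2_add bker_row(1)[OF bk x] bker_col(1)[OF bk x])
      from L2_int_mult[OF this gL2] show ?thesis by simp
    qed
    have "(kop T A f x + kop T (kadj A) f x) * f x = (\<integral>y. (A x y * f y + kadj A x y * f y) \<partial>LT T) * f x"
      unfolding kop_def using kop_int[OF bA f x] kop_int[OF bker_kadj[OF bA] f x] by simp
    also have "\<dots> = (\<integral>y. (A x y * f y + kadj A x y * f y) * f x \<partial>LT T)"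
      by simp
    also have "\<dots> = (\<integral>y. (A x y + A y x) * f y * f x \<partial>LT T)"
      by (intro Bochner_Integration.integral_cong refl) (simp add: kadj_def algebra_simps)
    also have "\<dots> = (\<integral>y. 2 * \<rho> * ((if y < x then 1 else 0) + (if x < y then 1 else 0)) * g y * g x + (Gs x y + Gs y x) * g y * g x \<partial>LT T)"
      by (intro Bochner_Integration.integral_cong refl) (use pt x in auto)
    also have "\<dots> = (\<integral>y. 2 * \<rho> * ((if y < x then 1 else 0) + (if x < y then 1 else 0)) * g y * g x \<partial>LT T) + Q x"
      unfolding Q_def using i1 i2 by simp
    also have "(\<integral>y. 2 * \<rho> * ((if y < x then 1 else 0) + (if x < y then 1 else 0)) * g y * g x \<partial>LT T) = (\<integral>y. 2 * \<rho> * g y * g x \<partial>LT T)"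
    proof (rule integral_AE_cong)
      show "(\<lambda>y. 2 * \<rho> * g y * g x) \<in> borel_measurable (LT T)" by measurable
      have "AE y in LT T. y \<noteq> x" using AE_lborel_LT[OF AE_lborel_singleton] .
      then show "AE y in LT T. 2 * \<rho> * g y * g x = 2 * \<rho> * ((if y < x then 1 else 0) + (if x < y then 1 else 0)) * g y * g x"
        by eventually_elim auto
    qed
    also have "(\<integral>y. 2 * \<rho> * g y * g x \<partial>LT T) = 2 * \<rho> * (\<integral>y. g y \<partial>LT T) * g x"
      by (simp add: mult.commute mult.left_commute)
    finally show ?thesis .
  qed
  have "inner_L2 T (kop T A f) f + inner_L2 T (kop T (kadj A) f) f = inner_L2 T (\<lambda>x. kop T A f x + kop T (kadj A) f x) f"
    by (rule inner_L2_add_left[symmetric]) (intro kop_L2(1)[OF bA f] kop_L2(1)[OF bker_kadj[OF bA] f] f)+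
  also have "\<dots> = (\<integral>x. 2 * \<rho> * (\<integral>y. g y \<partial>LT T) * g x + Q x \<partial>LT T)"
    unfolding inner_L2_def by (intro Bochner_Integration.integral_cong refl) (use inner_eq in auto)
  also have "\<dots> = 2 * \<rho> * (\<integral>y. g y \<partial>LT T) * (\<integral>x. g x \<partial>LT T) + (\<integral>x. Q x \<partial>LT T)"
    using gi Qi by simp
  also have "\<dots> = 2 * \<rho> * (\<integral>y. g y \<partial>LT T)\<^sup>2 + (\<integral>x. Q x \<partial>LT T)"
    by (simp add: power2_eq_square)
  finally have e: "inner_L2 T (kop T A f) f + inner_L2 T (kop T (kadj A) f) f = 2 * \<rho> * (\<integral>y. g y \<partial>LT T)\<^sup>2 + (\<integral>x. Q x \<partial>LT T)" .
  have "0 \<le> (\<integral>x. Q x \<partial>LT T)" unfolding Q_def by (rule nd[OF gL2])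
  moreover have "0 \<le> 2 * \<rho> * (\<integral>y. g y \<partial>LT T)\<^sup>2" using rho by simp
  ultimately show ?thesis using e unfolding A_def by linarith
qed

end

lemma D_op_Dgen: "D_op T lam \<rho> \<phi> Gs t = Dgen T (2 * lam) (Gt_kernel \<rho> Gs t) (2 * \<phi>) (one_kernel t)"
  by (simp add: D_op_def Dgen_def fun_eq_iff)

context L2T begin

lemma D_op_AE:
  assumes bk: "bker T Gs C"
    and aer: "AE x in LT T. AE y in LT T. G x y = Gs x y"
    and aec: "AE y in LT T. AE x in LT T. G x y = Gs x y"
    and f: "f \<in> L2 T"
  shows "AE x in LT T. D_op T lam \<rho> \<phi> G t f x = D_op T lam \<rho> \<phi> Gs t f x"
  using aer aec AE_LT_space
proof eventually_elim
  case (elim x)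
  have bA: "bker T (Gt_kernel \<rho> Gs t) (2 * ((2 * \<bar>\<rho>\<bar>)\<^sup>2 * T) + 2 * C)" by (rule bker_A[OF bk])
  have fm[measurable]: "f \<in> borel_measurable (LT T)" using f by (rule L2_meas)
  have k1: "kop T (Gt_kernel \<rho> G t) f x = kop T (Gt_kernel \<rho> Gs t) f x"
    unfolding kop_def
  proof (rule integral_AE_cong)
    show "(\<lambda>y. Gt_kernel \<rho> Gs t x y * f y) \<in> borel_measurable (LT T)"
      using kop_int[OF bA f elim(3)] by auto
    show "AE y in LT T. Gt_kernel \<rho> Gs t x y * f y = Gt_kernel \<rho> G t x y * f y"
      using elim(1) by eventually_elim (simp add: Gt_kernel_def Gtilde_def)
  qed
  have k2: "kop T (kadj (Gt_kernel \<rho> G t)) f x = kop T (kadj (Gt_kernel \<rho> Gs t)) f x"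
    unfolding kop_def
  proof (rule integral_AE_cong)
    show "(\<lambda>y. kadj (Gt_kernel \<rho> Gs t) x y * f y) \<in> borel_measurable (LT T)"
      using kop_int[OF bker_kadj[OF bA] f elim(3)] by auto
    show "AE y in LT T. kadj (Gt_kernel \<rho> Gs t) x y * f y = kadj (Gt_kernel \<rho> G t) x y * f y"
      using elim(2) by eventually_elim (simp add: kadj_def Gt_kernel_def Gtilde_def)
  qed
  show ?case unfolding D_op_def using k1 k2 by simp
qed

end

theorem lemma4p1:
  fixes T lam \<rho> \<phi> t :: real and G :: "real \<Rightarrow> real \<Rightarrow> real"
  assumes "T > 0" and "lam > 0" and "\<rho> \<ge> 0" and "\<phi> \<ge> 0"
    and "kernel_class T G"
    and "t \<in> {0..T}"
  shows
    "(\<forall>f\<in>L2 T. D_op T lam \<rho> \<phi> G t f \<in> L2 T) \<and>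
     (\<exists>C. \<forall>f\<in>L2 T. norm_L2 T (D_op T lam \<rho> \<phi> G t f) \<le> C * norm_L2 T f) \<and>
     (\<forall>f\<in>L2 T. \<not> (AE x in LT T. f x = 0) \<longrightarrow> inner_L2 T (D_op T lam \<rho> \<phi> G t f) f > 0) \<and>
     (\<forall>f\<in>L2 T. \<forall>g\<in>L2 T. inner_L2 T (D_op T lam \<rho> \<phi> G t f) g = inner_L2 T f (D_op T lam \<rho> \<phi> G t g)) \<and>
     (\<forall>g\<in>L2 T. \<exists>f\<in>L2 T. AE x in LT T. D_op T lam \<rho> \<phi> G t f x = g x) \<and>
     (\<forall>f\<in>L2 T. (AE x in LT T. D_op T lam \<rho> \<phi> G t f x = 0) \<longrightarrow> (AE x in LT T. f x = 0)) \<and>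
     (\<exists>C. \<forall>f\<in>L2 T. norm_L2 T f \<le> C * norm_L2 T (D_op T lam \<rho> \<phi> G t f))"
proof -
  interpret L: L2T T using assms(1) by unfold_locales
  obtain Gs C where bk: "bker T Gs C" and vGs: "\<forall>x\<in>{0..T}. \<forall>y\<in>{0..T}. \<not> y < x \<longrightarrow> Gs x y = 0"
    and aer: "AE x in LT T. AE y in LT T. G x y = Gs x y" and aec: "AE y in LT T. AE x in LT T. G x y = Gs x y"
    using L.Gs_exists[OF assms(5)] by blast
  have nd0: "nonneg_definite T G" using assms(5) by (simp add: kernel_class_def)
  have nd: "\<And>h. h \<in> L2 T \<Longrightarrow> 0 \<le> (\<integral>x. (\<integral>y. (Gs x y + Gs y x) * h y * h x \<partial>LT T) \<partial>LT T)"
    by (rule L.nonneg_transfer[OF nd0 bk aer aec])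
  define A where "A = Gt_kernel \<rho> Gs t"
  define B where "B = one_kernel t"
  define CA where "CA = 2 * ((2 * \<bar>\<rho>\<bar>)\<^sup>2 * T) + 2 * C"
  define CB where "CB = (1::real)\<^sup>2 * T"
  define Mc where "Mc = 2 * lam + 2 * sqrt (CA * T) + 2 * \<phi> * (sqrt (CB * T) * sqrt (CB * T))"
  define DS where "DS = Dgen T (2 * lam) A (2 * \<phi>) B"
  have bA: "bker T A CA" unfolding A_def CA_def by (rule L.bker_A[OF bk])
  have bB: "bker T B CB" unfolding B_def CB_def by (rule L.bker_one)
  have pos: "\<And>f. f \<in> L2 T \<Longrightarrow> inner_L2 T (kop T A f) f + inner_L2 T (kop T (kadj A) f) f \<ge> 0"
    unfolding A_def by (rule L.A_pos[OF bk vGs nd assms(3)])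
  interpret co: coerc T DS "2 * lam" Mc
    unfolding DS_def Mc_def using assms(2,4) by (intro L.Dgen_coerc[OF bA bB]) (auto intro: pos)
  have DSeq: "D_op T lam \<rho> \<phi> Gs t = DS" unfolding DS_def A_def B_def by (rule D_op_Dgen)
  have ae: "AE x in LT T. D_op T lam \<rho> \<phi> G t f x = DS f x" if f: "f \<in> L2 T" for f
    using L.D_op_AE[OF bk aer aec f, of lam \<rho> \<phi> t] unfolding DSeq .
  have ae': "AE x in LT T. DS f x = D_op T lam \<rho> \<phi> G t f x" if f: "f \<in> L2 T" for f
    using ae[OF f] by (auto elim: eventually_mono)
  have P1: "D_op T lam \<rho> \<phi> G t f \<in> L2 T" if f: "f \<in> L2 T" for f
    by (rule L.L2_AE_cong[OF co.D_L2[OF f] ae'[OF f]])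
  have nrm: "norm_L2 T (D_op T lam \<rho> \<phi> G t f) = norm_L2 T (DS f)" if f: "f \<in> L2 T" for f
    by (rule L.norm_L2_AE_cong[OF co.D_L2[OF f] ae'[OF f]])
  have inr: "inner_L2 T (D_op T lam \<rho> \<phi> G t f) g = inner_L2 T (DS f) g" if f: "f \<in> L2 T" and g: "g \<in> L2 T" for f g
    by (rule L.inner_L2_AE_cong[OF co.D_L2[OF f] g ae'[OF f]])
  have sym: "inner_L2 T (DS f) g = inner_L2 T f (DS g)" if f: "f \<in> L2 T" and g: "g \<in> L2 T" for f g
    unfolding DS_def by (rule L.Dgen_sym[OF bA bB f g])
  have S2: "\<exists>C. \<forall>f\<in>L2 T. norm_L2 T (D_op T lam \<rho> \<phi> G t f) \<le> C * norm_L2 T f"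
    using co.D_bound nrm by (intro exI[of _ Mc]) auto
  have S3: "\<forall>f\<in>L2 T. \<not> (AE x in LT T. f x = 0) \<longrightarrow> inner_L2 T (D_op T lam \<rho> \<phi> G t f) f > 0"
    using co.D_pos inr by auto
  have S4: "\<forall>f\<in>L2 T. \<forall>g\<in>L2 T. inner_L2 T (D_op T lam \<rho> \<phi> G t f) g = inner_L2 T f (D_op T lam \<rho> \<phi> G t g)"
  proof (intro ballI)
    fix f g assume f: "f \<in> L2 T" and g: "g \<in> L2 T"
    have "inner_L2 T (D_op T lam \<rho> \<phi> G t f) g = inner_L2 T (DS f) g" by (rule inr[OF f g])
    also have "\<dots> = inner_L2 T f (DS g)" by (rule sym[OF f g])
    also have "\<dots> = inner_L2 T (DS g) f" by (rule L.inner_L2_comm)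
    also have "\<dots> = inner_L2 T (D_op T lam \<rho> \<phi> G t g) f" by (rule inr[OF g f, symmetric])
    also have "\<dots> = inner_L2 T f (D_op T lam \<rho> \<phi> G t g)" by (rule L.inner_L2_comm)
    finally show "inner_L2 T (D_op T lam \<rho> \<phi> G t f) g = inner_L2 T f (D_op T lam \<rho> \<phi> G t g)" .
  qed
  have S5: "\<forall>g\<in>L2 T. \<exists>f\<in>L2 T. AE x in LT T. D_op T lam \<rho> \<phi> G t f x = g x"
  proof
    fix g assume g: "g \<in> L2 T"
    obtain f where f: "f \<in> L2 T" and fe: "AE x in LT T. DS f x = g x" using co.D_surj[OF g] by blast
    have "AE x in LT T. D_op T lam \<rho> \<phi> G t f x = g x" using ae[OF f] fe by eventually_elim simp
    then show "\<exists>f\<in>L2 T. AE x in LT T. D_op T lam \<rho> \<phi> G t f x = g x" using f by blast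
  qed
  have S6: "\<forall>f\<in>L2 T. (AE x in LT T. D_op T lam \<rho> \<phi> G t f x = 0) \<longrightarrow> (AE x in LT T. f x = 0)"
  proof (intro ballI impI)
    fix f assume f: "f \<in> L2 T" and z: "AE x in LT T. D_op T lam \<rho> \<phi> G t f x = 0"
    have "AE x in LT T. DS f x = 0" using ae[OF f] z by eventually_elim simp
    then show "AE x in LT T. f x = 0" by (rule co.D_inj[OF f])
  qed
  have S7: "\<exists>C. \<forall>f\<in>L2 T. norm_L2 T f \<le> C * norm_L2 T (D_op T lam \<rho> \<phi> G t f)"
    using co.D_lower nrm by (intro exI[of _ "1 / (2 * lam)"]) auto
  show ?thesis using P1 S2 S3 S4 S5 S6 S7 by blast
qed

end
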